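(* Let $r>0$ and assume $W$ satisfies (H). Let $u$ be a local minimizer of $\mathcal{E}$ with $\lim_{x\to\pm\infty}u(x)=\pm1$. Then $u$ is also a local minimizer of $\mathcal{F}$, i.e. for all $a<b$ and all $v\in L^\infty_{\rm loc}(\mathbb{R})$ with $v=u$ a.e. outside $[a+r,b-r]$, $\mathcal{F}_{(a,b)}(u)\le\mathcal{F}_{(a,b)}(v)$.
   Context: For $a<b$ and $u\in L^\infty_{\rm loc}(\mathbb{R})$: $\mathcal{F}_{(a,b)}(u):=\frac1{2r^2}\int_a^b(u(x+r)-u(x-r))^2dx+\int_a^bW(u(x))dx$ and $\mathcal{E}_{(a,b)}(u):=\frac1{2r^2}\int_a^b(\operatorname{osc}_{(x-r,x+r)}u)^2dx+\int_a^bW(u(x))dx$, with $\operatorname{osc}_I u:=\operatorname{ess\,sup}_I u-\operatorname{ess\,inf}_I u$. $u$ is a local minimizer of $\mathcal{E}$ if $\mathcal{E}_{(a,b)}(u)\le\mathcal{E}_{(a,b)}(v)$ for all $a<b$ and all $v\in L^\infty_{\rm loc}$ with $v=u$ a.e. outside $[a+r,b-r]$. Assumption (H): $W\in C(\mathbb{R})$, $W(\pm1)=0<W(t)$ for $t\ne\pm1$; $W$ strictly decreasing on $(-\infty,-1)$, strictly increasing on $(1,\infty)$; $W$ even on $[-1,1]$ with unique local maximum in $[-1,1]$ at $0$. *)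

theory Defs
  imports "HOL-Analysis.Analysis"
begin

text \<open>Locally essentially bounded, Lebesgue measurable functions (representatives of
  elements of L-infinity-loc of the real line).\<close>
definition Linfty_loc :: "(real \<Rightarrow> real) set" where
  "Linfty_loc = {u. u \<in> borel_measurable lebesgue \<and>
     (\<forall>a b. \<exists>C. AE x in lebesgue. x \<in> {a..b} \<longrightarrow> \<bar>u x\<bar> \<le> C)}"

definition ess_sup_on :: "real set \<Rightarrow> (real \<Rightarrow> real) \<Rightarrow> real" where
  "ess_sup_on I u = Inf {c. AE y in lebesgue. y \<in> I \<longrightarrow> u y \<le> c}"

definition ess_inf_on :: "real set \<Rightarrow> (real \<Rightarrow> real) \<Rightarrow> real" where
  "ess_inf_on I u = Sup {c. AE y in lebesgue. y \<in> I \<longrightarrow> c \<le> u y}"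

definition osc_on :: "real set \<Rightarrow> (real \<Rightarrow> real) \<Rightarrow> real" where
  "osc_on I u = ess_sup_on I u - ess_inf_on I u"

definition Fen :: "real \<Rightarrow> (real \<Rightarrow> real) \<Rightarrow> real \<Rightarrow> real \<Rightarrow> (real \<Rightarrow> real) \<Rightarrow> real" where
  "Fen r W a b u =
     1 / (2 * r\<^sup>2) * (LINT x:{a..b}|lebesgue. (u (x + r) - u (x - r))\<^sup>2)
     + (LINT x:{a..b}|lebesgue. W (u x))"

definition Een :: "real \<Rightarrow> (real \<Rightarrow> real) \<Rightarrow> real \<Rightarrow> real \<Rightarrow> (real \<Rightarrow> real) \<Rightarrow> real" where
  "Een r W a b u =
     1 / (2 * r\<^sup>2) * (LINT x:{a..b}|lebesgue. (osc_on {x - r<..<x + r} u)\<^sup>2)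
     + (LINT x:{a..b}|lebesgue. W (u x))"

definition local_minimizer ::
  "(real \<Rightarrow> real \<Rightarrow> (real \<Rightarrow> real) \<Rightarrow> real) \<Rightarrow> real \<Rightarrow> (real \<Rightarrow> real) \<Rightarrow> bool" where
  "local_minimizer En r u \<longleftrightarrow>
     (\<forall>a b v. a < b \<longrightarrow> v \<in> Linfty_loc \<longrightarrow>
        (AE x in lebesgue. x \<notin> {a + r..b - r} \<longrightarrow> v x = u x) \<longrightarrow>
        En a b u \<le> En a b v)"

definition local_max_on :: "real set \<Rightarrow> (real \<Rightarrow> real) \<Rightarrow> real \<Rightarrow> bool" where
  "local_max_on S W t \<longleftrightarrow> t \<in> S \<and>
     (\<exists>d>0. \<forall>s\<in>S. \<bar>s - t\<bar> < d \<longrightarrow> W s \<le> W t)"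

definition hyp_H :: "(real \<Rightarrow> real) \<Rightarrow> bool" where
  "hyp_H W \<longleftrightarrow> continuous_on UNIV W \<and> W (-1) = 0 \<and> W 1 = 0 \<and>
     (\<forall>t. t \<noteq> 1 \<and> t \<noteq> -1 \<longrightarrow> W t > 0) \<and>
     strict_antimono_on {..<-1} W \<and> strict_mono_on {1<..} W \<and>
     (\<forall>t\<in>{-1..1}. W (-t) = W t) \<and>
     (\<forall>t\<in>{-1..1}. local_max_on {-1..1} W t \<longleftrightarrow> t = 0)"

end

theory Submission
  imports Defs
begin


lemma meas_shift:
  fixes u :: "real \<Rightarrow> real"
  assumes "u \<in> borel_measurable lebesgue"
  shows "(\<lambda>x. u (x + c)) \<in> borel_measurable lebesgue"
proof -
  have "(\<lambda>x::real. c + 1 * x) \<in> lebesgue \<rightarrow>\<^sub>M lebesgue"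
    using lebesgue_affine_measurable[where c="\<lambda>x::real. 1" and t=c] by simp
  then have "(\<lambda>x::real. x + c) \<in> lebesgue \<rightarrow>\<^sub>M lebesgue" by (simp add: add.commute)
  from measurable_compose[OF this assms] show ?thesis by simp
qed

lemma AE_shift:
  assumes "AE y in lebesgue. P y"
  shows "AE x in lebesgue. P (x + c)"
proof -
  from assms obtain N where N: "N \<in> null_sets lebesgue" "{y. \<not> P y} \<subseteq> N"
    unfolding eventually_ae_filter by auto
  have "negligible N" using N negligible_iff_null_sets by blast
  then have "negligible ((+) (-c) ` N)" by (rule negligible_translation)
  then have "(+) (-c) ` N \<in> null_sets lebesgue" using negligible_iff_null_sets by blast
  moreover have "{x. \<not> P (x + c)} \<subseteq> (+) (-c) ` N"
  proof
    fix x assume "x \<in> {x. \<not> P (x + c)}"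
    then have "x + c \<in> N" using N by auto
    then show "x \<in> (+) (-c) ` N" by (rule rev_image_eqI) simp
  qed
  ultimately show ?thesis unfolding eventually_ae_filter by auto
qed

lemma AE_negligible:
  assumes "AE y in lebesgue. P y"
  shows "negligible {y. \<not> P y}"
proof -
  from assms obtain N where N: "N \<in> null_sets lebesgue" "{y. \<not> P y} \<subseteq> N"
    unfolding eventually_ae_filter by auto
  then show ?thesis using negligible_iff_null_sets negligible_subset by blast
qed

lemma negligible_AE:
  assumes "negligible {y. \<not> P y}"
  shows "AE y in lebesgue. P y"
  using assms negligible_iff_null_sets unfolding eventually_ae_filter by auto

lemma AE_neq_point: "AE y in lebesgue. y \<noteq> (p::real)"
  by (rule negligible_AE) simp

lemma bdd_set_integrable:
  fixes f :: "real \<Rightarrow> real"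
  assumes "f \<in> borel_measurable lebesgue"
    and "AE x in lebesgue. x \<in> {a..b} \<longrightarrow> \<bar>f x\<bar> \<le> C"
  shows "set_integrable lebesgue {a..b} f"
proof (rule set_integrable_bound[where f="\<lambda>_. C"])
  show "set_integrable lebesgue {a..b} (\<lambda>_. C)"
    by (rule absolutely_integrable_continuous_real) simp
  show "set_borel_measurable lebesgue {a..b} f"
    unfolding set_borel_measurable_def
    by (intro borel_measurable_scaleR borel_measurable_indicator assms(1)) simp
  show "AE x in lebesgue. x \<in> {a..b} \<longrightarrow> norm (f x) \<le> norm C"
    using assms(2) by eventually_elim auto
qed

lemma LinftyD:
  assumes "f \<in> Linfty_loc"
  shows "f \<in> borel_measurable lebesgue" "\<exists>C. AE x in lebesgue. x \<in> {a..b} \<longrightarrow> \<bar>f x\<bar> \<le> C"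
  using assms unfolding Linfty_loc_def by auto

lemma LinftyI:
  assumes "f \<in> borel_measurable lebesgue" "\<And>a b. \<exists>C. AE x in lebesgue. x \<in> {a..b} \<longrightarrow> \<bar>f x\<bar> \<le> C"
  shows "f \<in> Linfty_loc"
  using assms unfolding Linfty_loc_def by auto

lemma Linfty_set_integrable:
  assumes "f \<in> Linfty_loc"
  shows "set_integrable lebesgue {a..b} f"
  using LinftyD(2)[OF assms, of a b] LinftyD(1)[OF assms] bdd_set_integrable by blast

lemma Linfty_integrable_on:
  assumes "f \<in> Linfty_loc"
  shows "f integrable_on {a..b}"
  using set_lebesgue_integral_eq_integral(1)[OF Linfty_set_integrable[OF assms]] .

lemma Linfty_LINT:
  assumes "f \<in> Linfty_loc"
  shows "(LINT x:{a..b}|lebesgue. f x) = integral {a..b} f"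
  using set_lebesgue_integral_eq_integral(2)[OF Linfty_set_integrable[OF assms]] .

lemma Linfty_shift:
  assumes "f \<in> Linfty_loc"
  shows "(\<lambda>x. f (x + c)) \<in> Linfty_loc"
proof (rule LinftyI)
  show "(\<lambda>x. f (x + c)) \<in> borel_measurable lebesgue" using meas_shift LinftyD(1)[OF assms] by blast
  fix a b
  obtain C where "AE x in lebesgue. x \<in> {a+c..b+c} \<longrightarrow> \<bar>f x\<bar> \<le> C" using LinftyD(2)[OF assms] by blast
  from AE_shift[OF this, of c] show "\<exists>C. AE x in lebesgue. x \<in> {a..b} \<longrightarrow> \<bar>f (x + c)\<bar> \<le> C"
    by (intro exI[of _ C]) (auto elim!: eventually_mono)
qed

lemma Linfty_const: "(\<lambda>x. k) \<in> Linfty_loc"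
  by (rule LinftyI) (auto intro!: exI[of _ "\<bar>k\<bar>"])

lemma Linfty_add:
  assumes "f \<in> Linfty_loc" "g \<in> Linfty_loc"
  shows "(\<lambda>x. f x + g x) \<in> Linfty_loc"
proof (rule LinftyI)
  show "(\<lambda>x. f x + g x) \<in> borel_measurable lebesgue" by (intro borel_measurable_add borel_measurable_times LinftyD(1)[OF assms(1)] LinftyD(1)[OF assms(2)])
  fix a b
  obtain C where C: "AE x in lebesgue. x \<in> {a..b} \<longrightarrow> \<bar>f x\<bar> \<le> C" using LinftyD(2)[OF assms(1)] by blast
  obtain D where D: "AE x in lebesgue. x \<in> {a..b} \<longrightarrow> \<bar>g x\<bar> \<le> D" using LinftyD(2)[OF assms(2)] by blast
  from C D have "AE x in lebesgue. x \<in> {a..b} \<longrightarrow> \<bar>f x + g x\<bar> \<le> C + D" by eventually_elim auto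
  then show "\<exists>C. AE x in lebesgue. x \<in> {a..b} \<longrightarrow> \<bar>f x + g x\<bar> \<le> C" by blast
qed

lemma Linfty_mult:
  assumes "f \<in> Linfty_loc" "g \<in> Linfty_loc"
  shows "(\<lambda>x. f x * g x) \<in> Linfty_loc"
proof (rule LinftyI)
  show "(\<lambda>x. f x * g x) \<in> borel_measurable lebesgue" by (intro borel_measurable_times LinftyD(1)[OF assms(1)] LinftyD(1)[OF assms(2)])
  fix a b
  obtain C where C: "AE x in lebesgue. x \<in> {a..b} \<longrightarrow> \<bar>f x\<bar> \<le> C" using LinftyD(2)[OF assms(1)] by blast
  obtain D where D: "AE x in lebesgue. x \<in> {a..b} \<longrightarrow> \<bar>g x\<bar> \<le> D" using LinftyD(2)[OF assms(2)] by blast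
  from C D have "AE x in lebesgue. x \<in> {a..b} \<longrightarrow> \<bar>f x * g x\<bar> \<le> C * D"
  proof eventually_elim
    case (elim x)
    show ?case
    proof
      assume "x \<in> {a..b}"
      then have "\<bar>f x\<bar> \<le> C" "\<bar>g x\<bar> \<le> D" using elim by auto
      then show "\<bar>f x * g x\<bar> \<le> C * D" by (simp add: abs_mult mult_mono')
    qed
  qed
  then show "\<exists>C. AE x in lebesgue. x \<in> {a..b} \<longrightarrow> \<bar>f x * g x\<bar> \<le> C" by blast
qed

lemma Linfty_uminus:
  assumes "f \<in> Linfty_loc"
  shows "(\<lambda>x. - f x) \<in> Linfty_loc"
  using Linfty_mult[OF Linfty_const[of "-1"] assms] by simp

lemma Linfty_diff:
  assumes "f \<in> Linfty_loc" "g \<in> Linfty_loc"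
  shows "(\<lambda>x. f x - g x) \<in> Linfty_loc"
  using Linfty_add[OF assms(1) Linfty_uminus[OF assms(2)]] by simp

lemma Linfty_square:
  assumes "f \<in> Linfty_loc"
  shows "(\<lambda>x. (f x)\<^sup>2) \<in> Linfty_loc"
  using Linfty_mult[OF assms assms] by (simp add: power2_eq_square)

lemma Linfty_comp:
  assumes "f \<in> Linfty_loc" "continuous_on UNIV W"
  shows "(\<lambda>x. W (f x)) \<in> Linfty_loc"
proof (rule LinftyI)
  have "W \<in> borel_measurable borel" using assms(2) by (rule borel_measurable_continuous_onI)
  then show "(\<lambda>x. W (f x)) \<in> borel_measurable lebesgue"
    using measurable_compose[OF LinftyD(1)[OF assms(1)]] by blast
  fix a b
  obtain C where C: "AE x in lebesgue. x \<in> {a..b} \<longrightarrow> \<bar>f x\<bar> \<le> C" using LinftyD(2)[OF assms(1)] by blast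
  have "compact (W ` {-C..C})"
    by (rule compact_continuous_image) (auto intro: continuous_on_subset[OF assms(2)])
  then have "bounded (W ` {-C..C})" by (rule compact_imp_bounded)
  then obtain K where K0: "\<forall>y\<in>W ` {-C..C}. \<bar>y\<bar> \<le> K" unfolding bounded_real by blast
  have K: "\<bar>W s\<bar> \<le> K" if "\<bar>s\<bar> \<le> C" for s
    using K0 that by (simp add: abs_le_iff)
  from C have "AE x in lebesgue. x \<in> {a..b} \<longrightarrow> \<bar>W (f x)\<bar> \<le> K"
    by (rule eventually_mono) (use K in blast)
  then show "\<exists>C. AE x in lebesgue. x \<in> {a..b} \<longrightarrow> \<bar>W (f x)\<bar> \<le> C" by blast
qed



lemma Ioo_not_negligible:
  fixes \<alpha> \<beta> :: real
  assumes "\<alpha> < \<beta>" shows "\<not> negligible {\<alpha><..<\<beta>}"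
  using negligible_interval(2)[of \<alpha> \<beta>] assms by (simp add: box_real)

lemma open_sets_lebesgue: "open (S::real set) \<Longrightarrow> S \<in> sets lebesgue"
  by (metis borel_open sets_completionI_sets sets_lborel)

lemma ess_order:
  fixes \<alpha> \<beta> c1 c2 :: real and u :: "real \<Rightarrow> real"
  assumes "\<alpha> < \<beta>"
    and "AE y in lebesgue. y \<in> {\<alpha><..<\<beta>} \<longrightarrow> u y \<le> c1"
    and "AE y in lebesgue. y \<in> {\<alpha><..<\<beta>} \<longrightarrow> c2 \<le> u y"
  shows "c2 \<le> c1"
proof (rule ccontr)
  assume "\<not> c2 \<le> c1"
  from assms(2,3) have "AE y in lebesgue. y \<notin> {\<alpha><..<\<beta>}"
    by eventually_elim (use \<open>\<not> c2 \<le> c1\<close> in auto)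
  from AE_negligible[OF this] have "negligible {\<alpha><..<\<beta>}"
    by (simp add: greaterThanLessThan_def greaterThan_def lessThan_def Int_def)
  with Ioo_not_negligible[OF assms(1)] show False by simp
qed

lemma Linfty_window_bound:
  assumes "u \<in> Linfty_loc"
  obtains C where "AE y in lebesgue. y \<in> {\<alpha><..<\<beta>} \<longrightarrow> u y \<le> C"
    "AE y in lebesgue. y \<in> {\<alpha><..<\<beta>} \<longrightarrow> - C \<le> u y"
proof -
  obtain C where C: "AE x in lebesgue. x \<in> {\<alpha>..\<beta>} \<longrightarrow> \<bar>u x\<bar> \<le> C"
    using LinftyD(2)[OF assms] by blast
  from C have "AE y in lebesgue. y \<in> {\<alpha><..<\<beta>} \<longrightarrow> u y \<le> C"
    by (rule eventually_mono) auto
  moreover from C have "AE y in lebesgue. y \<in> {\<alpha><..<\<beta>} \<longrightarrow> - C \<le> u y"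
    by (rule eventually_mono) auto
  ultimately show ?thesis using that by blast
qed

lemma ess_sup_le:
  assumes "u \<in> Linfty_loc" "\<alpha> < \<beta>"
    and "AE y in lebesgue. y \<in> {\<alpha><..<\<beta>} \<longrightarrow> u y \<le> c"
  shows "ess_sup_on {\<alpha><..<\<beta>} u \<le> c"
proof -
  obtain C where C: "AE y in lebesgue. y \<in> {\<alpha><..<\<beta>} \<longrightarrow> - C \<le> u y"
    using Linfty_window_bound[OF assms(1)] by blast
  have "bdd_below {c. AE y in lebesgue. y \<in> {\<alpha><..<\<beta>} \<longrightarrow> u y \<le> c}"
    by (rule bdd_belowI[of _ "-C"]) (use ess_order[OF assms(2) _ C] in blast)
  then show ?thesis unfolding ess_sup_on_def
    by (intro cInf_lower) (use assms(3) in simp_all)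
qed

lemma ess_inf_ge:
  assumes "u \<in> Linfty_loc" "\<alpha> < \<beta>"
    and "AE y in lebesgue. y \<in> {\<alpha><..<\<beta>} \<longrightarrow> c \<le> u y"
  shows "c \<le> ess_inf_on {\<alpha><..<\<beta>} u"
proof -
  obtain C where C: "AE y in lebesgue. y \<in> {\<alpha><..<\<beta>} \<longrightarrow> u y \<le> C"
    using Linfty_window_bound[OF assms(1)] by blast
  have "bdd_above {c. AE y in lebesgue. y \<in> {\<alpha><..<\<beta>} \<longrightarrow> c \<le> u y}"
    by (rule bdd_aboveI[of _ "C"]) (use ess_order[OF assms(2) C] in blast)
  then show ?thesis unfolding ess_inf_on_def
    by (intro cSup_upper) (use assms(3) in simp_all)
qed

lemma ess_inf_le_sup:
  assumes "u \<in> Linfty_loc" "\<alpha> < \<beta>"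
  shows "ess_inf_on {\<alpha><..<\<beta>} u \<le> ess_sup_on {\<alpha><..<\<beta>} u"
proof -
  obtain C where C1: "AE y in lebesgue. y \<in> {\<alpha><..<\<beta>} \<longrightarrow> u y \<le> C"
    and C2: "AE y in lebesgue. y \<in> {\<alpha><..<\<beta>} \<longrightarrow> - C \<le> u y"
    using Linfty_window_bound[OF assms(1)] by blast
  show ?thesis unfolding ess_inf_on_def ess_sup_on_def
  proof (rule cSup_least)
    show "{c. AE y in lebesgue. y \<in> {\<alpha><..<\<beta>} \<longrightarrow> c \<le> u y} \<noteq> {}" using C2 by blast
    fix c2 assume c2: "c2 \<in> {c. AE y in lebesgue. y \<in> {\<alpha><..<\<beta>} \<longrightarrow> c \<le> u y}"
    show "c2 \<le> Inf {c. AE y in lebesgue. y \<in> {\<alpha><..<\<beta>} \<longrightarrow> u y \<le> c}"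
    proof (rule cInf_greatest)
      show "{c. AE y in lebesgue. y \<in> {\<alpha><..<\<beta>} \<longrightarrow> u y \<le> c} \<noteq> {}" using C1 by blast
      fix c1 assume "c1 \<in> {c. AE y in lebesgue. y \<in> {\<alpha><..<\<beta>} \<longrightarrow> u y \<le> c}"
      then show "c2 \<le> c1" using ess_order[OF assms(2)] c2 by blast
    qed
  qed
qed

lemma osc_sq_le:
  assumes "u \<in> Linfty_loc" "\<alpha> < \<beta>"
    and "AE y in lebesgue. y \<in> {\<alpha><..<\<beta>} \<longrightarrow> u y \<le> c1"
    and "AE y in lebesgue. y \<in> {\<alpha><..<\<beta>} \<longrightarrow> c2 \<le> u y"
  shows "(osc_on {\<alpha><..<\<beta>} u)\<^sup>2 \<le> (c1 - c2)\<^sup>2"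
proof -
  have "0 \<le> osc_on {\<alpha><..<\<beta>} u" unfolding osc_on_def using ess_inf_le_sup[OF assms(1,2)] by simp
  moreover have "osc_on {\<alpha><..<\<beta>} u \<le> c1 - c2"
    unfolding osc_on_def using ess_sup_le[OF assms(1,2,3)] ess_inf_ge[OF assms(1,2,4)] by simp
  ultimately show ?thesis by (simp add: power_mono)
qed

lemma ess_inf_neg: "ess_inf_on J u = - ess_sup_on J (\<lambda>y. - u y)"
proof -
  have "uminus ` {c. AE y in lebesgue. y \<in> J \<longrightarrow> - u y \<le> c} = {c. AE y in lebesgue. y \<in> J \<longrightarrow> c \<le> u y}"
  proof (intro equalityI subsetI)
    fix d assume "d \<in> uminus ` {c. AE y in lebesgue. y \<in> J \<longrightarrow> - u y \<le> c}"
    then obtain c where "d = - c" "AE y in lebesgue. y \<in> J \<longrightarrow> - u y \<le> c" by auto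
    then show "d \<in> {c. AE y in lebesgue. y \<in> J \<longrightarrow> c \<le> u y}"
      by (auto elim!: eventually_mono)
  next
    fix d assume d: "d \<in> {c. AE y in lebesgue. y \<in> J \<longrightarrow> c \<le> u y}"
    have "- d \<in> {c. AE y in lebesgue. y \<in> J \<longrightarrow> - u y \<le> c}"
      using d by (auto elim!: eventually_mono)
    then show "d \<in> uminus ` {c. AE y in lebesgue. y \<in> J \<longrightarrow> - u y \<le> c}"
      by (rule rev_image_eqI) simp
  qed
  then show ?thesis unfolding ess_inf_on_def ess_sup_on_def Inf_real_def by simp
qed



lemma ess_sup_meas:
  assumes u: "u \<in> Linfty_loc" and ab: "\<alpha> < \<beta>"
  shows "(\<lambda>x. ess_sup_on {x+\<alpha><..<x+\<beta>} u) \<in> borel_measurable lebesgue"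
  unfolding borel_measurable_iff_greater
proof
  fix c :: real
  let ?S = "\<lambda>x. ess_sup_on {x+\<alpha><..<x+\<beta>} u"
  have "open {x. c < ?S x}"
    unfolding open_dist
  proof (intro ballI)
    fix x0 assume "x0 \<in> {x. c < ?S x}"
    then have cx0: "c < ?S x0" by simp
    obtain c' where c': "c < c'" "c' < ?S x0" using dense[OF cx0] by blast
    have notAE: "\<not> (AE y in lebesgue. y \<in> {x0+\<alpha><..<x0+\<beta>} \<longrightarrow> u y \<le> c')"
    proof
      assume "AE y in lebesgue. y \<in> {x0+\<alpha><..<x0+\<beta>} \<longrightarrow> u y \<le> c'"
      from ess_sup_le[OF u _ this] ab have "?S x0 \<le> c'" by simp
      with c' show False by simp
    qed
    have "\<exists>n. \<not> (AE y in lebesgue. y \<in> {x0+\<alpha>+1/Suc n..x0+\<beta>-1/Suc n} \<longrightarrow> u y \<le> c')"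
    proof (rule ccontr)
      assume "\<not> ?thesis"
      then have "\<forall>n. AE y in lebesgue. y \<in> {x0+\<alpha>+1/Suc n..x0+\<beta>-1/Suc n} \<longrightarrow> u y \<le> c'" by blast
      then have "AE y in lebesgue. \<forall>n. y \<in> {x0+\<alpha>+1/Suc n..x0+\<beta>-1/Suc n} \<longrightarrow> u y \<le> c'"
        by (rule AE_all_countable[THEN iffD2])
      then have "AE y in lebesgue. y \<in> {x0+\<alpha><..<x0+\<beta>} \<longrightarrow> u y \<le> c'"
      proof (rule eventually_mono)
        fix y assume H: "\<forall>n. y \<in> {x0+\<alpha>+1/Suc n..x0+\<beta>-1/Suc n} \<longrightarrow> u y \<le> c'"
        show "y \<in> {x0+\<alpha><..<x0+\<beta>} \<longrightarrow> u y \<le> c'"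
        proof
          assume y: "y \<in> {x0+\<alpha><..<x0+\<beta>}"
          then have "0 < min (y - (x0+\<alpha>)) (x0+\<beta>-y)" by simp
          from reals_Archimedean[OF this] obtain n where
            n: "inverse (real (Suc n)) < min (y - (x0+\<alpha>)) (x0+\<beta>-y)" by blast
          then have "y \<in> {x0+\<alpha>+1/Suc n..x0+\<beta>-1/Suc n}" by (simp add: field_simps)
          with H show "u y \<le> c'" by blast
        qed
      qed
      with notAE show False by simp
    qed
    then obtain n where n: "\<not> (AE y in lebesgue. y \<in> {x0+\<alpha>+1/Suc n..x0+\<beta>-1/Suc n} \<longrightarrow> u y \<le> c')"
      by blast
    define d where "d = 1 / real (Suc n)"
    have d0: "d > 0" unfolding d_def by simp
    show "\<exists>e>0. \<forall>x. dist x x0 < e \<longrightarrow> x \<in> {x. c < ?S x}"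
    proof (intro exI[of _ d] conjI allI impI)
      show "d > 0" by fact
      fix x assume "dist x x0 < d"
      then have xd: "x < x0 + d" "x0 < x + d" by (auto simp: dist_real_def abs_less_iff)
      have notAEx: "\<not> (AE y in lebesgue. y \<in> {x+\<alpha><..<x+\<beta>} \<longrightarrow> u y \<le> c')"
      proof
        assume "AE y in lebesgue. y \<in> {x+\<alpha><..<x+\<beta>} \<longrightarrow> u y \<le> c'"
        then have "AE y in lebesgue. y \<in> {x0+\<alpha>+1/Suc n..x0+\<beta>-1/Suc n} \<longrightarrow> u y \<le> c'"
          by (rule eventually_mono) (use xd in \<open>auto simp: d_def\<close>)
        with n show False by simp
      qed
      obtain C where C: "AE y in lebesgue. y \<in> {x+\<alpha><..<x+\<beta>} \<longrightarrow> u y \<le> C"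
        using Linfty_window_bound[OF u] by blast
      have "c' \<le> ?S x" unfolding ess_sup_on_def
      proof (rule cInf_greatest)
        show "{c. AE y in lebesgue. y \<in> {x+\<alpha><..<x+\<beta>} \<longrightarrow> u y \<le> c} \<noteq> {}" using C by blast
        fix e assume e: "e \<in> {c. AE y in lebesgue. y \<in> {x+\<alpha><..<x+\<beta>} \<longrightarrow> u y \<le> c}"
        show "c' \<le> e"
        proof (rule ccontr)
          assume "\<not> c' \<le> e"
          from e have "AE y in lebesgue. y \<in> {x+\<alpha><..<x+\<beta>} \<longrightarrow> u y \<le> c'"
            by (auto elim!: eventually_mono) (use \<open>\<not> c' \<le> e\<close> in linarith)
          with notAEx show False by simp
        qed
      qed
      with c' show "x \<in> {x. c < ?S x}" by simp
    qed
  qed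
  then show "{w \<in> space lebesgue. c < ?S w} \<in> sets lebesgue"
    using open_sets_lebesgue by simp
qed

lemma ess_inf_meas:
  assumes u: "u \<in> Linfty_loc" and ab: "\<alpha> < \<beta>"
  shows "(\<lambda>x. ess_inf_on {x+\<alpha><..<x+\<beta>} u) \<in> borel_measurable lebesgue"
proof -
  have "(\<lambda>x. ess_sup_on {x+\<alpha><..<x+\<beta>} (\<lambda>y. - u y)) \<in> borel_measurable lebesgue"
    by (rule ess_sup_meas[OF Linfty_uminus[OF u] ab])
  then have "(\<lambda>x. - ess_sup_on {x+\<alpha><..<x+\<beta>} (\<lambda>y. - u y)) \<in> borel_measurable lebesgue"
    by (rule borel_measurable_uminus)
  then show ?thesis by (simp add: ess_inf_neg[symmetric])
qed

lemma osc_Linfty: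
  assumes u: "u \<in> Linfty_loc" and r: "r > 0"
  shows "(\<lambda>x. osc_on {x-r<..<x+r} u) \<in> Linfty_loc"
proof (rule LinftyI)
  have "(\<lambda>x. ess_sup_on {x+(-r)<..<x+r} u - ess_inf_on {x+(-r)<..<x+r} u) \<in> borel_measurable lebesgue"
    using ess_sup_meas[OF u, of "-r" r] ess_inf_meas[OF u, of "-r" r] r by (intro borel_measurable_diff) auto
  then show "(\<lambda>x. osc_on {x-r<..<x+r} u) \<in> borel_measurable lebesgue"
    by (simp add: osc_on_def)
  fix a b
  obtain C where C: "AE x in lebesgue. x \<in> {a-r..b+r} \<longrightarrow> \<bar>u x\<bar> \<le> C"
    using LinftyD(2)[OF u] by blast
  have "\<bar>osc_on {x-r<..<x+r} u\<bar> \<le> 2 * C" if x: "x \<in> {a..b}" for x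
  proof -
    have xr: "x - r < x + r" using r by simp
    have h1: "AE y in lebesgue. y \<in> {x-r<..<x+r} \<longrightarrow> u y \<le> C"
      using C by (rule eventually_mono) (use x in auto)
    have h2: "AE y in lebesgue. y \<in> {x-r<..<x+r} \<longrightarrow> -C \<le> u y"
      using C by (rule eventually_mono) (use x in auto)
    show ?thesis
      using ess_sup_le[OF u xr h1] ess_inf_ge[OF u xr h2] ess_inf_le_sup[OF u xr]
      unfolding osc_on_def by simp
  qed
  then show "\<exists>C. AE x in lebesgue. x \<in> {a..b} \<longrightarrow> \<bar>osc_on {x-r<..<x+r} u\<bar> \<le> C"
    by (intro exI[of _ "2*C"]) auto
qed



lemma neg_left_bdd:
  fixes D :: "real set"
  assumes d: "\<delta> > 0" and sub: "D \<subseteq> {p..<p+\<delta>}"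
    and H: "\<And>y. y \<in> D \<Longrightarrow> negligible (D \<inter> {y-\<delta><..<y})"
  shows "negligible D"
proof (cases "D = {}")
  case True then show ?thesis by simp
next
  case False
  have bdd: "bdd_above D" using sub by (auto intro!: bdd_aboveI[of _ "p+\<delta>"])
  define s where "s = Sup D"
  have "\<forall>n. \<exists>y\<in>D. s - 1 / Suc n < y"
  proof
    fix n
    have "s - 1 / Suc n < Sup D" unfolding s_def by simp
    then show "\<exists>y\<in>D. s - 1 / Suc n < y" using less_cSupE[OF _ False] by blast
  qed
  then obtain yn where yn: "\<And>n. yn n \<in> D" "\<And>n. s - 1 / Suc n < yn n" by metis
  have "D \<subseteq> {s} \<union> \<Union> (range (\<lambda>n. D \<inter> {yn n - \<delta><..<yn n}))"
  proof
    fix z assume z: "z \<in> D"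
    have zs: "z \<le> s" unfolding s_def using cSup_upper[OF z bdd] .
    show "z \<in> {s} \<union> \<Union> (range (\<lambda>n. D \<inter> {yn n - \<delta><..<yn n}))"
    proof (cases "z = s")
      case True then show ?thesis by simp
    next
      case False
      with zs have "0 < s - z" by simp
      from reals_Archimedean[OF this] obtain n where "inverse (real (Suc n)) < s - z" by blast
      then have "1 / real (Suc n) < s - z" by (simp add: inverse_eq_divide)
      then have "z < yn n" using yn(2)[of n] by linarith
      moreover have "yn n \<in> {p..<p+\<delta>}" "z \<in> {p..<p+\<delta>}" using sub yn(1)[of n] z by blast+
      then have "yn n - \<delta> < z" by simp
      ultimately show ?thesis using z by auto
    qed
  qed
  moreover have "negligible ({s} \<union> \<Union> (range (\<lambda>n. D \<inter> {yn n - \<delta><..<yn n})))"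
    using H yn(1) by (intro negligible_Un negligible_countable_Union) auto
  ultimately show ?thesis using negligible_subset by blast
qed

lemma neg_right_bdd:
  fixes D :: "real set"
  assumes d: "\<delta> > 0" and sub: "D \<subseteq> {p..<p+\<delta>}"
    and H: "\<And>y. y \<in> D \<Longrightarrow> negligible (D \<inter> {y<..<y+\<delta>})"
  shows "negligible D"
proof (cases "D = {}")
  case True then show ?thesis by simp
next
  case False
  have bdd: "bdd_below D" using sub by (auto intro!: bdd_belowI[of _ "p"])
  define s where "s = Inf D"
  have "\<forall>n. \<exists>y\<in>D. y < s + 1 / Suc n"
  proof
    fix n
    have "Inf D < s + 1 / Suc n" unfolding s_def by simp
    then show "\<exists>y\<in>D. y < s + 1 / Suc n" using cInf_lessD[OF False] by blast
  qed
  then obtain yn where yn: "\<And>n. yn n \<in> D" "\<And>n. yn n < s + 1 / Suc n" by metis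
  have "D \<subseteq> {s} \<union> \<Union> (range (\<lambda>n. D \<inter> {yn n<..<yn n + \<delta>}))"
  proof
    fix z assume z: "z \<in> D"
    have zs: "s \<le> z" unfolding s_def using cInf_lower[OF z bdd] .
    show "z \<in> {s} \<union> \<Union> (range (\<lambda>n. D \<inter> {yn n<..<yn n + \<delta>}))"
    proof (cases "z = s")
      case True then show ?thesis by simp
    next
      case False
      with zs have "0 < z - s" by simp
      from reals_Archimedean[OF this] obtain n where "inverse (real (Suc n)) < z - s" by blast
      then have "1 / real (Suc n) < z - s" by (simp add: inverse_eq_divide)
      then have "yn n < z" using yn(2)[of n] by linarith
      moreover have "yn n \<in> {p..<p+\<delta>}" "z \<in> {p..<p+\<delta>}" using sub yn(1)[of n] z by blast+
      then have "z < yn n + \<delta>" by simp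
      ultimately show ?thesis using z by auto
    qed
  qed
  moreover have "negligible ({s} \<union> \<Union> (range (\<lambda>n. D \<inter> {yn n<..<yn n + \<delta>})))"
    using H yn(1) by (intro negligible_Un negligible_countable_Union) auto
  ultimately show ?thesis using negligible_subset by blast
qed

lemma neg_pieces:
  fixes D :: "real set"
  assumes d: "\<delta> > 0"
    and H: "\<And>k::int. negligible (D \<inter> {of_int k * \<delta>..<of_int k * \<delta> + \<delta>})"
  shows "negligible D"
proof -
  have "D \<subseteq> \<Union> (range (\<lambda>k::int. D \<inter> {of_int k * \<delta>..<of_int k * \<delta> + \<delta>}))"
  proof
    fix z assume z: "z \<in> D"
    define k where "k = \<lfloor>z / \<delta>\<rfloor>"
    have "of_int k \<le> z / \<delta>" "z / \<delta> < of_int k + 1" unfolding k_def by linarith+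
    then have "of_int k * \<delta> \<le> z" "z < of_int k * \<delta> + \<delta>" using d by (simp_all add: field_simps)
    then show "z \<in> \<Union> (range (\<lambda>k::int. D \<inter> {of_int k * \<delta>..<of_int k * \<delta> + \<delta>}))" using z by auto
  qed
  moreover have "negligible (\<Union> (range (\<lambda>k::int. D \<inter> {of_int k * \<delta>..<of_int k * \<delta> + \<delta>})))"
    using H by (intro negligible_countable_Union) auto
  ultimately show ?thesis using negligible_subset by blast
qed

lemma neg_left:
  fixes D :: "real set"
  assumes d: "\<delta> > 0" and H: "\<And>y. y \<in> D \<Longrightarrow> negligible (D \<inter> {y-\<delta><..<y})"
  shows "negligible D"
proof (rule neg_pieces[OF d])
  fix k :: int
  show "negligible (D \<inter> {of_int k * \<delta>..<of_int k * \<delta> + \<delta>})"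
    by (rule neg_left_bdd[OF d, of _ "of_int k * \<delta>"]) (auto intro: negligible_subset[OF H])
qed

lemma neg_right:
  fixes D :: "real set"
  assumes d: "\<delta> > 0" and H: "\<And>y. y \<in> D \<Longrightarrow> negligible (D \<inter> {y<..<y+\<delta>})"
  shows "negligible D"
proof (rule neg_pieces[OF d])
  fix k :: int
  show "negligible (D \<inter> {of_int k * \<delta>..<of_int k * \<delta> + \<delta>})"
    by (rule neg_right_bdd[OF d, of _ "of_int k * \<delta>"]) (auto intro: negligible_subset[OF H])
qed

lemma endpoint_gen:
  fixes u :: "real \<Rightarrow> real"
  assumes u: "u \<in> Linfty_loc" and d: "\<delta> > 0"
    and J: "\<And>y. J y = {y-\<delta><..<y} \<or> J y = {y<..<y+\<delta>}"
    and negrule: "\<And>D. (\<And>y. y \<in> D \<Longrightarrow> negligible (D \<inter> J y)) \<Longrightarrow> negligible D"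
  shows "AE y in lebesgue. u y \<le> ess_sup_on (J y) u"
proof -
  define A where "A q = {y. ess_sup_on (J y) u < q \<and> q < u y}" for q :: real
  have negA: "negligible (A q)" for q
  proof (rule negrule)
    fix y2 assume y2: "y2 \<in> A q"
    from J[of y2] obtain \<alpha> \<beta> where Jy: "J y2 = {\<alpha><..<\<beta>}" by blast
    obtain C where "AE y in lebesgue. y \<in> {\<alpha><..<\<beta>} \<longrightarrow> u y \<le> C"
      using Linfty_window_bound[OF u] by blast
    then have ne: "{c. AE y in lebesgue. y \<in> J y2 \<longrightarrow> u y \<le> c} \<noteq> {}"
      unfolding Jy by blast
    from y2 have "Inf {c. AE y in lebesgue. y \<in> J y2 \<longrightarrow> u y \<le> c} < q"
      unfolding A_def ess_sup_on_def by simp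
    from cInf_lessD[OF ne this] obtain e where
      e: "AE y in lebesgue. y \<in> J y2 \<longrightarrow> u y \<le> e" "e < q" by blast
    have "A q \<inter> J y2 \<subseteq> {y. \<not> (y \<in> J y2 \<longrightarrow> u y \<le> e)}"
      using e(2) unfolding A_def by auto
    then show "negligible (A q \<inter> J y2)" using AE_negligible[OF e(1)] negligible_subset by blast
  qed
  have "{y. \<not> u y \<le> ess_sup_on (J y) u} \<subseteq> \<Union> (A ` \<rat>)"
  proof
    fix y assume "y \<in> {y. \<not> u y \<le> ess_sup_on (J y) u}"
    then have "ess_sup_on (J y) u < u y" by simp
    from Rats_dense_in_real[OF this] obtain q where "q \<in> \<rat>" "ess_sup_on (J y) u < q" "q < u y" by blast
    then show "y \<in> \<Union> (A ` \<rat>)" unfolding A_def by auto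
  qed
  moreover have "negligible (\<Union> (A ` \<rat>))"
    using negA by (intro negligible_countable_Union) (auto simp: countable_rat)
  ultimately have "negligible {y. \<not> u y \<le> ess_sup_on (J y) u}"
    by (rule negligible_subset[rotated])
  then show ?thesis by (rule negligible_AE)
qed

lemma endpoint_left:
  fixes u :: "real \<Rightarrow> real"
  assumes u: "u \<in> Linfty_loc" and d: "\<delta> > 0"
  shows "AE y in lebesgue. u y \<le> ess_sup_on {y-\<delta><..<y} u"
  by (rule endpoint_gen[OF u d]) (simp, erule neg_left[OF d])

lemma endpoint_right:
  fixes u :: "real \<Rightarrow> real"
  assumes u: "u \<in> Linfty_loc" and d: "\<delta> > 0"
  shows "AE y in lebesgue. u y \<le> ess_sup_on {y<..<y+\<delta>} u"
  by (rule endpoint_gen[OF u d]) (simp, erule neg_right[OF d])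

lemma F_le_E_pointwise:
  fixes u :: "real \<Rightarrow> real"
  assumes u: "u \<in> Linfty_loc" and r: "r > 0"
  shows "AE x in lebesgue. \<bar>u (x + r) - u (x - r)\<bar> \<le> osc_on {x-r<..<x+r} u"
proof -
  have r2: "2 * r > 0" using r by simp
  have u': "(\<lambda>y. - u y) \<in> Linfty_loc" using Linfty_uminus[OF u] .
  have e1: "AE x in lebesgue. u (x + r) \<le> ess_sup_on {x-r<..<x+r} u"
  proof (rule eventually_mono[OF AE_shift[OF endpoint_left[OF u r2], of r]])
    fix x assume "u (x + r) \<le> ess_sup_on {x + r - 2 * r<..<x + r} u"
    moreover have "x + r - 2 * r = x - r" by simp
    ultimately show "u (x + r) \<le> ess_sup_on {x-r<..<x+r} u" by simp
  qed
  have e2: "AE x in lebesgue. u (x - r) \<le> ess_sup_on {x-r<..<x+r} u"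
  proof (rule eventually_mono[OF AE_shift[OF endpoint_right[OF u r2], of "-r"]])
    fix x assume h: "u (x + - r) \<le> ess_sup_on {x + - r<..<x + - r + 2 * r} u"
    have q1: "x - r + 2 * r = x + r" by simp
    have q2: "x + - r = x - r" by simp
    from h show "u (x - r) \<le> ess_sup_on {x-r<..<x+r} u" by (simp only: q2 q1)
  qed
  have e3: "AE x in lebesgue. - u (x + r) \<le> ess_sup_on {x-r<..<x+r} (\<lambda>y. - u y)"
  proof (rule eventually_mono[OF AE_shift[OF endpoint_left[OF u' r2], of r]])
    fix x assume "- u (x + r) \<le> ess_sup_on {x + r - 2 * r<..<x + r} (\<lambda>y. - u y)"
    moreover have "x + r - 2 * r = x - r" by simp
    ultimately show "- u (x + r) \<le> ess_sup_on {x-r<..<x+r} (\<lambda>y. - u y)" by simp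
  qed
  have e4: "AE x in lebesgue. - u (x - r) \<le> ess_sup_on {x-r<..<x+r} (\<lambda>y. - u y)"
  proof (rule eventually_mono[OF AE_shift[OF endpoint_right[OF u' r2], of "-r"]])
    fix x assume h: "- u (x + - r) \<le> ess_sup_on {x + - r<..<x + - r + 2 * r} (\<lambda>y. - u y)"
    have q1: "x - r + 2 * r = x + r" by simp
    have q2: "x + - r = x - r" by simp
    from h show "- u (x - r) \<le> ess_sup_on {x-r<..<x+r} (\<lambda>y. - u y)" by (simp only: q2 q1)
  qed
  from e1 e2 e3 e4 show ?thesis
  proof eventually_elim
    case (elim x)
    have "ess_inf_on {x-r<..<x+r} u = - ess_sup_on {x-r<..<x+r} (\<lambda>y. - u y)" by (rule ess_inf_neg)
    with elim show ?case unfolding osc_on_def abs_le_iff by linarith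
  qed
qed



lemma int_piece_bound:
  fixes f :: "real \<Rightarrow> real"
  assumes f: "f integrable_on {p..q}" and pq: "p \<le> q"
    and H: "AE x in lebesgue. x \<in> {p..q} \<longrightarrow> f x \<le> K"
  shows "integral {p..q} f \<le> K * (q - p)"
proof -
  define N where "N = {x. \<not> (x \<in> {p..q} \<longrightarrow> f x \<le> K)}"
  have N: "negligible N" unfolding N_def by (rule AE_negligible[OF H])
  define g where "g x = (if x \<in> N then K else f x)" for x
  have eq: "integral {p..q} f = integral {p..q} g"
    by (rule integral_spike[OF N]) (simp add: g_def)
  have gi: "g integrable_on {p..q}"
    by (rule integrable_spike[OF f N]) (simp add: g_def)
  have "integral {p..q} g \<le> integral {p..q} (\<lambda>x. K)"
    by (rule integral_le[OF gi]) (auto simp: g_def N_def)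
  also have "\<dots> = K * (q - p)" using pq by simp
  finally show ?thesis using eq by simp
qed

lemma int_split:
  fixes f :: "real \<Rightarrow> real"
  assumes f: "f integrable_on {p..p + h * real N}" and h: "h \<ge> 0"
  shows "integral {p..p + h * real N} f = (\<Sum>k<N. integral {p + h * real k..p + h * real (Suc k)} f)"
  using f
proof (induction N)
  case 0 then show ?case by simp
next
  case (Suc N)
  have le1: "p \<le> p + h * real N" using h by simp
  have le2: "p + h * real N \<le> p + h * real (Suc N)" using h by (simp add: mult_left_mono)
  have fi: "f integrable_on {p..p + h * real N}"
    by (rule integrable_on_subinterval[OF Suc.prems]) (use le2 in auto)
  have "integral {p..p + h * real (Suc N)} f = integral {p..p + h * real N} f + integral {p + h * real N..p + h * real (Suc N)} f"
    using Henstock_Kurzweil_Integration.integral_combine[OF le1 le2 Suc.prems] by simp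
  also have "\<dots> = (\<Sum>k<Suc N. integral {p + h * real k..p + h * real (Suc k)} f)"
    using Suc.IH[OF fi] by simp
  finally show ?case .
qed

lemma int_shift:
  fixes f :: "real \<Rightarrow> real"
  shows "integral {p..q} (\<lambda>t. f (t + c)) = integral {p+c..q+c} f"
proof -
  have "(\<lambda>t. f (t + c)) = f \<circ> (+) c" by (auto simp: add.commute)
  then show ?thesis using integral_shift_Icc_real[of p q f c] by simp
qed

lemma Fen_integral:
  assumes v: "v \<in> Linfty_loc" and W: "continuous_on UNIV W"
  shows "Fen r W a b v = 1 / (2 * r\<^sup>2) * integral {a..b} (\<lambda>x. (v (x + r) - v (x - r))\<^sup>2)
     + integral {a..b} (\<lambda>x. W (v x))"
proof -
  have "(\<lambda>x. (v (x + r) - v (x + - r))\<^sup>2) \<in> Linfty_loc"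
    by (intro Linfty_square Linfty_diff Linfty_shift v)
  then have 1: "(\<lambda>x. (v (x + r) - v (x - r))\<^sup>2) \<in> Linfty_loc" by simp
  have 2: "(\<lambda>x. W (v x)) \<in> Linfty_loc" by (rule Linfty_comp[OF v W])
  show ?thesis unfolding Fen_def Linfty_LINT[OF 1] Linfty_LINT[OF 2] ..
qed

lemma Een_integral:
  assumes v: "v \<in> Linfty_loc" and W: "continuous_on UNIV W" and r: "r > 0"
  shows "Een r W a b v = 1 / (2 * r\<^sup>2) * integral {a..b} (\<lambda>x. (osc_on {x-r<..<x+r} v)\<^sup>2)
     + integral {a..b} (\<lambda>x. W (v x))"
proof -
  have 1: "(\<lambda>x. (osc_on {x-r<..<x+r} v)\<^sup>2) \<in> Linfty_loc"
    by (intro Linfty_square osc_Linfty v r)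
  have 2: "(\<lambda>x. W (v x)) \<in> Linfty_loc" by (rule Linfty_comp[OF v W])
  show ?thesis unfolding Een_def Linfty_LINT[OF 1] Linfty_LINT[OF 2] ..
qed



locale constr =
  fixes r :: real and W u v :: "real \<Rightarrow> real" and a b M \<epsilon> \<eta> P :: real and N :: nat
  assumes r: "r > 0" and Wc: "continuous_on UNIV W" and W0: "\<And>s. W s \<ge> 0"
    and u: "u \<in> Linfty_loc" and v: "v \<in> Linfty_loc"
    and eps: "\<epsilon> > 0" and eta: "\<eta> \<ge> 0"
    and uR: "AE x in lebesgue. x > M \<longrightarrow> \<bar>u x - 1\<bar> < \<epsilon>"
    and uL: "AE x in lebesgue. x < -M \<longrightarrow> \<bar>u x + 1\<bar> < \<epsilon>"
    and WR: "\<And>s. \<bar>s - 1\<bar> < \<epsilon> \<Longrightarrow> W s \<le> \<eta>"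
    and WL: "\<And>s. \<bar>s + 1\<bar> < \<epsilon> \<Longrightarrow> W s \<le> \<eta>"
    and ab: "a < b" and vu: "AE x in lebesgue. x \<notin> {a+r..b-r} \<longrightarrow> v x = u x"
    and P1: "P + 2*r < -M" and P2: "P + 2*r < a"
    and Q1: "b \<le> P + 2*r*real N" and Q2: "M < P + 2*r*real N"
begin

definition "Q = P + 2*r*real N"
definition "A = P - 2*r"
definition "B = Q + 4*r"
definition "c k t = v (t + P + 2*r*real k)"
definition "w t y = (if t + P - r \<le> y \<and> y < t + Q + r
   then (\<Sum>j\<le>N. indicator {t+P+2*r*real j - r..<t+P+2*r*real j + r} y * c j t) else u y)"

lemma w_left: "y < t + P - r \<Longrightarrow> w t y = u y"
  unfolding w_def by simp

lemma w_right: "t + Q + r \<le> y \<Longrightarrow> w t y = u y"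
  unfolding w_def by simp

lemma cells_disjoint:
  assumes "t+P+2*r*real j - r \<le> y" "y < t+P+2*r*real j + r"
    "t+P+2*r*real k - r \<le> y" "y < t+P+2*r*real k + r"
  shows "j = k"
proof -
  have "2*r*real j < 2*r*real k + 2*r" "2*r*real k < 2*r*real j + 2*r" using assms by linarith+
  then have "2*r*real j < 2*r*(real k + 1)" "2*r*real k < 2*r*(real j + 1)" by (simp_all add: algebra_simps)
  then have "real j < real k + 1" "real k < real j + 1" using r by (simp_all add: mult_less_cancel_left_pos)
  then show ?thesis by linarith
qed

lemma w_cell:
  assumes k: "k \<le> N" and y: "t+P+2*r*real k - r \<le> y" "y < t+P+2*r*real k + r"
  shows "w t y = c k t"
proof -
  have k1: "2*r*real k \<le> 2*r*real N" using k r by simp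
  have k0: "0 \<le> 2*r*real k" using r by simp
  have mid: "t + P - r \<le> y \<and> y < t + Q + r" unfolding Q_def
    using y k0 k1 by (intro conjI; linarith)
  have "(\<Sum>j\<le>N. indicator {t+P+2*r*real j - r..<t+P+2*r*real j + r} y * c j t)
      = indicator {t+P+2*r*real k - r..<t+P+2*r*real k + r} y * c k t"
  proof (rule sum.remove[where x=k, THEN trans])
    show "finite {..N}" by simp
    show "k \<in> {..N}" using k by simp
    have "(\<Sum>j\<in>{..N} - {k}. indicator {t+P+2*r*real j - r..<t+P+2*r*real j + r} y * c j t) = 0"
    proof (rule sum.neutral, intro ballI)
      fix j assume "j \<in> {..N} - {k}"
      then have "j \<noteq> k" by simp
      then have "y \<notin> {t+P+2*r*real j - r..<t+P+2*r*real j + r}"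
        using cells_disjoint[of t j y k] y by auto
      then show "indicator {t+P+2*r*real j - r..<t+P+2*r*real j + r} y * c j t = 0" by simp
    qed
    then show "indicator {t+P+2*r*real k - r..<t+P+2*r*real k + r} y * c k t +
      (\<Sum>j\<in>{..N} - {k}. indicator {t+P+2*r*real j - r..<t+P+2*r*real j + r} y * c j t) =
      indicator {t+P+2*r*real k - r..<t+P+2*r*real k + r} y * c k t" by simp
  qed
  also have "\<dots> = c k t" using y by simp
  finally show ?thesis using mid unfolding w_def by simp
qed

lemma w_Linfty: "w t \<in> Linfty_loc"
proof (rule LinftyI)
  have m: "(\<lambda>y. \<Sum>j\<le>N. indicator {t+P+2*r*real j - r..<t+P+2*r*real j + r} y * c j t) \<in> borel_measurable lebesgue"
    by (intro borel_measurable_sum borel_measurable_times borel_measurable_indicator borel_measurable_const)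
       (auto intro: sets_completionI_sets simp: sets_lborel)
  have s: "{y. t + P - r \<le> y \<and> y < t + Q + r} \<in> sets lebesgue"
  proof -
    have "{y. t + P - r \<le> y \<and> y < t + Q + r} = {t+P-r..<t+Q+r}" by auto
    then show ?thesis by (auto intro: sets_completionI_sets simp: sets_lborel)
  qed
  have weq: "w t = (\<lambda>y. if y \<in> {y. t + P - r \<le> y \<and> y < t + Q + r} then
      (\<Sum>j\<le>N. indicator {t+P+2*r*real j - r..<t+P+2*r*real j + r} y * c j t) else u y)"
    unfolding w_def[abs_def] by simp
  show "w t \<in> borel_measurable lebesgue"
    unfolding weq
    by (rule measurable_If_set[OF m LinftyD(1)[OF u]]) (use s in simp)
  fix a' b'
  obtain C where C: "AE x in lebesgue. x \<in> {a'..b'} \<longrightarrow> \<bar>u x\<bar> \<le> C" using LinftyD(2)[OF u] by blast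
  define D where "D = (\<Sum>j\<le>N. \<bar>c j t\<bar>)"
  have wb: "\<bar>w t y\<bar> \<le> \<bar>u y\<bar> + D" for y
  proof (cases "t + P - r \<le> y \<and> y < t + Q + r")
    case True
    have "\<bar>\<Sum>j\<le>N. indicator {t+P+2*r*real j - r..<t+P+2*r*real j + r} y * c j t\<bar>
        \<le> (\<Sum>j\<le>N. \<bar>indicator {t+P+2*r*real j - r..<t+P+2*r*real j + r} y * c j t\<bar>)"
      by (rule sum_abs)
    also have "\<dots> \<le> D" unfolding D_def
      by (intro sum_mono) (auto simp: indicator_def)
    moreover have "w t y = (\<Sum>j\<le>N. indicator {t+P+2*r*real j - r..<t+P+2*r*real j + r} y * c j t)"
      unfolding w_def by (rule if_P[OF True])
    ultimately show ?thesis by (simp add: add_increasing)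
  next
    case False
    have "D \<ge> 0" unfolding D_def by (intro sum_nonneg) auto
    moreover have "w t y = u y" unfolding w_def by (rule if_not_P[OF False])
    ultimately show ?thesis by simp
  qed
  from C have "AE x in lebesgue. x \<in> {a'..b'} \<longrightarrow> \<bar>w t x\<bar> \<le> C + D"
  proof (rule eventually_mono)
    fix x assume "x \<in> {a'..b'} \<longrightarrow> \<bar>u x\<bar> \<le> C"
    then show "x \<in> {a'..b'} \<longrightarrow> \<bar>w t x\<bar> \<le> C + D" using wb[of x] by auto
  qed
  then show "\<exists>C. AE x in lebesgue. x \<in> {a'..b'} \<longrightarrow> \<bar>w t x\<bar> \<le> C" by blast
qed

lemma w_out:
  assumes t: "0 \<le> t" "t \<le> 2*r" and y: "y \<notin> {A+r..B-r}"
  shows "w t y = u y"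
proof -
  have "\<not> (t + P - r \<le> y \<and> y < t + Q + r)" using t y r unfolding A_def B_def by auto
  then show ?thesis unfolding w_def by (rule if_not_P)
qed

end



lemma sq_bound_helper:
  fixes X d e :: real
  assumes "X \<le> d\<^sup>2" "0 \<le> d" "d \<le> e"
  shows "X \<le> e\<^sup>2"
  using assms(1) power_mono[OF assms(3,2), of 2] by linarith

context constr
begin

lemma PM: "P + r < -M" using P1 r by linarith

lemma osc1:
  assumes t: "0 \<le> t" "t \<le> 2*r" and x: "x \<le> t + P - 2*r"
  shows "(osc_on {x-r<..<x+r} (w t))\<^sup>2 \<le> (2*\<epsilon>)\<^sup>2"
proof -
  have xr: "x - r < x + r" using r by simp
  have key: "y \<in> {x-r<..<x+r} \<Longrightarrow> w t y = u y \<and> y < -M" for y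
    using w_left[of y t] x t PM by auto
  have h1: "AE y in lebesgue. y \<in> {x-r<..<x+r} \<longrightarrow> w t y \<le> -1+\<epsilon>"
  proof (rule eventually_mono[OF uL])
    fix y assume H: "y < -M \<longrightarrow> \<bar>u y + 1\<bar> < \<epsilon>"
    show "y \<in> {x-r<..<x+r} \<longrightarrow> w t y \<le> -1+\<epsilon>"
      using key[of y] H by (auto simp: abs_less_iff)
  qed
  have h2: "AE y in lebesgue. y \<in> {x-r<..<x+r} \<longrightarrow> -1-\<epsilon> \<le> w t y"
  proof (rule eventually_mono[OF uL])
    fix y assume H: "y < -M \<longrightarrow> \<bar>u y + 1\<bar> < \<epsilon>"
    show "y \<in> {x-r<..<x+r} \<longrightarrow> -1-\<epsilon> \<le> w t y"
      using key[of y] H by (auto simp: abs_less_iff)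
  qed
  from osc_sq_le[OF w_Linfty xr h1 h2] show ?thesis by (simp add: algebra_simps)
qed

lemma osc5:
  assumes t: "0 \<le> t" "t \<le> 2*r" and x: "t + Q + 2*r \<le> x"
  shows "(osc_on {x-r<..<x+r} (w t))\<^sup>2 \<le> (2*\<epsilon>)\<^sup>2"
proof -
  have xr: "x - r < x + r" using r by simp
  have QM: "M < Q" using Q2 unfolding Q_def .
  have key: "y \<in> {x-r<..<x+r} \<Longrightarrow> w t y = u y \<and> y > M" for y
    using w_right[of t y] x t QM r by auto
  have h1: "AE y in lebesgue. y \<in> {x-r<..<x+r} \<longrightarrow> w t y \<le> 1+\<epsilon>"
  proof (rule eventually_mono[OF uR])
    fix y assume H: "y > M \<longrightarrow> \<bar>u y - 1\<bar> < \<epsilon>"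
    show "y \<in> {x-r<..<x+r} \<longrightarrow> w t y \<le> 1+\<epsilon>"
      using key[of y] H by (auto simp: abs_less_iff)
  qed
  have h2: "AE y in lebesgue. y \<in> {x-r<..<x+r} \<longrightarrow> 1-\<epsilon> \<le> w t y"
  proof (rule eventually_mono[OF uR])
    fix y assume H: "y > M \<longrightarrow> \<bar>u y - 1\<bar> < \<epsilon>"
    show "y \<in> {x-r<..<x+r} \<longrightarrow> 1-\<epsilon> \<le> w t y"
      using key[of y] H by (auto simp: abs_less_iff)
  qed
  from osc_sq_le[OF w_Linfty xr h1 h2] show ?thesis by (simp add: algebra_simps)
qed

lemma osc2:
  assumes t: "0 \<le> t" "t \<le> 2*r" and x: "t + P - 2*r \<le> x" "x \<le> t + P"
  shows "(osc_on {x-r<..<x+r} (w t))\<^sup>2 \<le> (\<bar>c 0 t + 1\<bar> + 2*\<epsilon>)\<^sup>2"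
proof -
  have xr: "x - r < x + r" using r by simp
  have key: "y \<in> {x-r<..<x+r} \<Longrightarrow> (w t y = u y \<and> y < -M) \<or> w t y = c 0 t" for y
  proof -
    assume y: "y \<in> {x-r<..<x+r}"
    show ?thesis
    proof (cases "y < t + P - r")
      case True then show ?thesis using w_left[of y t] t PM by auto
    next
      case False
      then have "w t y = c 0 t" using w_cell[of 0 t y] y x by auto
      then show ?thesis by simp
    qed
  qed
  have h1: "AE y in lebesgue. y \<in> {x-r<..<x+r} \<longrightarrow> w t y \<le> max (-1+\<epsilon>) (c 0 t)"
  proof (rule eventually_mono[OF uL])
    fix y assume H: "y < -M \<longrightarrow> \<bar>u y + 1\<bar> < \<epsilon>"
    show "y \<in> {x-r<..<x+r} \<longrightarrow> w t y \<le> max (-1+\<epsilon>) (c 0 t)"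
      using key[of y] H by (auto simp: abs_less_iff)
  qed
  have h2: "AE y in lebesgue. y \<in> {x-r<..<x+r} \<longrightarrow> min (-1-\<epsilon>) (c 0 t) \<le> w t y"
  proof (rule eventually_mono[OF uL])
    fix y assume H: "y < -M \<longrightarrow> \<bar>u y + 1\<bar> < \<epsilon>"
    show "y \<in> {x-r<..<x+r} \<longrightarrow> min (-1-\<epsilon>) (c 0 t) \<le> w t y"
      using key[of y] H by (auto simp: abs_less_iff)
  qed
  show ?thesis
    by (rule sq_bound_helper[OF osc_sq_le[OF w_Linfty xr h1 h2]])
       (use eps in \<open>auto simp: max_def min_def abs_if\<close>)
qed

lemma osc4:
  assumes t: "0 \<le> t" "t \<le> 2*r" and x: "t + Q \<le> x" "x \<le> t + Q + 2*r"
  shows "(osc_on {x-r<..<x+r} (w t))\<^sup>2 \<le> (\<bar>c N t - 1\<bar> + 2*\<epsilon>)\<^sup>2"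
proof -
  have xr: "x - r < x + r" using r by simp
  have QM: "M < Q" using Q2 unfolding Q_def .
  have key: "y \<in> {x-r<..<x+r} \<Longrightarrow> (w t y = u y \<and> y > M) \<or> w t y = c N t" for y
  proof -
    assume y: "y \<in> {x-r<..<x+r}"
    show ?thesis
    proof (cases "t + Q + r \<le> y")
      case True then show ?thesis using w_right[of t y] t QM r by auto
    next
      case False
      then have "w t y = c N t" using w_cell[of N t y] y x unfolding Q_def by auto
      then show ?thesis by simp
    qed
  qed
  have h1: "AE y in lebesgue. y \<in> {x-r<..<x+r} \<longrightarrow> w t y \<le> max (1+\<epsilon>) (c N t)"
  proof (rule eventually_mono[OF uR])
    fix y assume H: "y > M \<longrightarrow> \<bar>u y - 1\<bar> < \<epsilon>"
    show "y \<in> {x-r<..<x+r} \<longrightarrow> w t y \<le> max (1+\<epsilon>) (c N t)"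
      using key[of y] H by (auto simp: abs_less_iff)
  qed
  have h2: "AE y in lebesgue. y \<in> {x-r<..<x+r} \<longrightarrow> min (1-\<epsilon>) (c N t) \<le> w t y"
  proof (rule eventually_mono[OF uR])
    fix y assume H: "y > M \<longrightarrow> \<bar>u y - 1\<bar> < \<epsilon>"
    show "y \<in> {x-r<..<x+r} \<longrightarrow> min (1-\<epsilon>) (c N t) \<le> w t y"
      using key[of y] H by (auto simp: abs_less_iff)
  qed
  show ?thesis
    by (rule sq_bound_helper[OF osc_sq_le[OF w_Linfty xr h1 h2]])
       (use eps in \<open>auto simp: max_def min_def abs_if\<close>)
qed

lemma osc3:
  assumes k: "k < N" and x: "t + P + 2*r*real k \<le> x" "x \<le> t + P + 2*r*real (Suc k)"
  shows "(osc_on {x-r<..<x+r} (w t))\<^sup>2 \<le> (c (Suc k) t - c k t)\<^sup>2"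
proof -
  have xr: "x - r < x + r" using r by simp
  have key: "y \<in> {x-r<..<x+r} \<Longrightarrow> w t y = c k t \<or> w t y = c (Suc k) t" for y
  proof -
    assume y: "y \<in> {x-r<..<x+r}"
    show ?thesis
    proof (cases "y < t + P + 2*r*real k + r")
      case True then show ?thesis using w_cell[of k t y] y x k by auto
    next
      case False
      have "t + P + 2*r*real (Suc k) - r \<le> y" using False by (simp add: algebra_simps)
      moreover have "y < t + P + 2*r*real (Suc k) + r" using y x by auto
      ultimately have "w t y = c (Suc k) t" using w_cell[of "Suc k" t y] k by auto
      then show ?thesis by simp
    qed
  qed
  have h1: "AE y in lebesgue. y \<in> {x-r<..<x+r} \<longrightarrow> w t y \<le> max (c k t) (c (Suc k) t)"
    by (rule AE_I2) (use key in force)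
  have h2: "AE y in lebesgue. y \<in> {x-r<..<x+r} \<longrightarrow> min (c k t) (c (Suc k) t) \<le> w t y"
    by (rule AE_I2) (use key in force)
  have "(max (c k t) (c (Suc k) t) - min (c k t) (c (Suc k) t))\<^sup>2 = (c (Suc k) t - c k t)\<^sup>2"
    by (cases "c k t \<le> c (Suc k) t") (auto simp: max_def min_def power2_commute)
  with osc_sq_le[OF w_Linfty xr h1 h2] show ?thesis by simp
qed

end



context constr
begin

lemma QP: "P \<le> Q" unfolding Q_def using r by simp

lemma osc_fun_L: "(\<lambda>x. (osc_on {x-r<..<x+r} (w t))\<^sup>2) \<in> Linfty_loc"
  by (intro Linfty_square osc_Linfty w_Linfty r)

lemma osc_int_bound:
  assumes t: "0 \<le> t" "t \<le> 2*r"
  shows "integral {A..B} (\<lambda>x. (osc_on {x-r<..<x+r} (w t))\<^sup>2)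
    \<le> (2*\<epsilon>)\<^sup>2 * t + (\<bar>c 0 t + 1\<bar> + 2*\<epsilon>)\<^sup>2 * (2*r)
       + 2*r * (\<Sum>k<N. (c (Suc k) t - c k t)\<^sup>2)
       + (\<bar>c N t - 1\<bar> + 2*\<epsilon>)\<^sup>2 * (2*r) + (2*\<epsilon>)\<^sup>2 * (2*r - t)"
proof -
  define f where "f = (\<lambda>x. (osc_on {x-r<..<x+r} (w t))\<^sup>2)"
  have fi: "f integrable_on {p..q}" for p q unfolding f_def by (rule Linfty_integrable_on[OF osc_fun_L])
  define p1 where "p1 = t + P - 2*r"
  define p2 where "p2 = t + P"
  define p3 where "p3 = t + P + 2*r*real N"
  define p4 where "p4 = t + P + 2*r*real N + 2*r"
  have o1: "A \<le> p1" "p1 \<le> p2" "p2 \<le> p3" "p3 \<le> p4" "p4 \<le> B"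
    using t r unfolding p1_def p2_def p3_def p4_def A_def B_def Q_def by auto
  have split: "integral {A..B} f = integral {A..p1} f + integral {p1..p2} f + integral {p2..p3} f
      + integral {p3..p4} f + integral {p4..B} f"
  proof -
    have "integral {A..B} f = integral {A..p1} f + integral {p1..B} f"
      using Henstock_Kurzweil_Integration.integral_combine[of A p1 B f] o1 fi by simp
    moreover have "integral {p1..B} f = integral {p1..p2} f + integral {p2..B} f"
      using Henstock_Kurzweil_Integration.integral_combine[of p1 p2 B f] o1 fi by simp
    moreover have "integral {p2..B} f = integral {p2..p3} f + integral {p3..B} f"
      using Henstock_Kurzweil_Integration.integral_combine[of p2 p3 B f] o1 fi by simp
    moreover have "integral {p3..B} f = integral {p3..p4} f + integral {p4..B} f"
      using Henstock_Kurzweil_Integration.integral_combine[of p3 p4 B f] o1 fi by simp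
    ultimately show ?thesis by simp
  qed
  have I1: "integral {A..p1} f \<le> (2*\<epsilon>)\<^sup>2 * t"
  proof -
    have "integral {A..p1} f \<le> (2*\<epsilon>)\<^sup>2 * (p1 - A)"
      by (rule int_piece_bound[OF fi o1(1)], rule AE_I2) (use osc1[OF t] in \<open>auto simp: f_def p1_def\<close>)
    then show ?thesis unfolding p1_def A_def by simp
  qed
  have I2: "integral {p1..p2} f \<le> (\<bar>c 0 t + 1\<bar> + 2*\<epsilon>)\<^sup>2 * (2*r)"
  proof -
    have "integral {p1..p2} f \<le> (\<bar>c 0 t + 1\<bar> + 2*\<epsilon>)\<^sup>2 * (p2 - p1)"
      by (rule int_piece_bound[OF fi o1(2)], rule AE_I2) (use osc2[OF t] in \<open>auto simp: f_def p1_def p2_def\<close>)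
    then show ?thesis unfolding p1_def p2_def by simp
  qed
  have I3: "integral {p2..p3} f \<le> 2*r * (\<Sum>k<N. (c (Suc k) t - c k t)\<^sup>2)"
  proof -
    have "integral {p2..p3} f = (\<Sum>k<N. integral {p2 + 2*r*real k..p2 + 2*r*real (Suc k)} f)"
      unfolding p3_def p2_def using int_split[of f "t+P" "2*r" N] fi r by (simp add: add.assoc)
    also have "\<dots> \<le> (\<Sum>k<N. (c (Suc k) t - c k t)\<^sup>2 * (2*r))"
    proof (rule sum_mono)
      fix k assume k: "k \<in> {..<N}"
      have le: "p2 + 2*r*real k \<le> p2 + 2*r*real (Suc k)" using r by simp
      have "integral {p2 + 2*r*real k..p2 + 2*r*real (Suc k)} f
          \<le> (c (Suc k) t - c k t)\<^sup>2 * ((p2 + 2*r*real (Suc k)) - (p2 + 2*r*real k))"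
        by (rule int_piece_bound[OF fi le], rule AE_I2)
           (use osc3[of k] k in \<open>auto simp: f_def p2_def\<close>)
      then show "integral {p2 + 2*r*real k..p2 + 2*r*real (Suc k)} f \<le> (c (Suc k) t - c k t)\<^sup>2 * (2*r)"
        by (simp add: algebra_simps)
    qed
    also have "\<dots> = 2*r * (\<Sum>k<N. (c (Suc k) t - c k t)\<^sup>2)"
      by (simp add: sum_distrib_left mult.commute)
    finally show ?thesis .
  qed
  have I4: "integral {p3..p4} f \<le> (\<bar>c N t - 1\<bar> + 2*\<epsilon>)\<^sup>2 * (2*r)"
  proof -
    have "integral {p3..p4} f \<le> (\<bar>c N t - 1\<bar> + 2*\<epsilon>)\<^sup>2 * (p4 - p3)"
      by (rule int_piece_bound[OF fi o1(4)], rule AE_I2) (use osc4[OF t] in \<open>auto simp: f_def p3_def p4_def Q_def\<close>)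
    then show ?thesis unfolding p3_def p4_def by simp
  qed
  have I5: "integral {p4..B} f \<le> (2*\<epsilon>)\<^sup>2 * (2*r - t)"
  proof -
    have "integral {p4..B} f \<le> (2*\<epsilon>)\<^sup>2 * (B - p4)"
      by (rule int_piece_bound[OF fi o1(5)], rule AE_I2) (use osc5[OF t] in \<open>auto simp: f_def p4_def Q_def\<close>)
    then show ?thesis unfolding p4_def B_def Q_def by (simp add: algebra_simps)
  qed
  show ?thesis using split I1 I2 I3 I4 I5 unfolding f_def by linarith
qed

end



context constr
begin

lemma W_int_bound:
  assumes t: "0 \<le> t" "t \<le> 2*r"
  shows "integral {A..B} (\<lambda>x. W (w t x))
    \<le> \<eta> * (t + r) + 2*r * (\<Sum>k<Suc N. W (c k t)) + \<eta> * (3*r - t)"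
proof -
  define f where "f = (\<lambda>x. W (w t x))"
  have fL: "f \<in> Linfty_loc" unfolding f_def by (rule Linfty_comp[OF w_Linfty Wc])
  have fi: "f integrable_on {p..q}" for p q by (rule Linfty_integrable_on[OF fL])
  define q1 where "q1 = t + P - r"
  define q2 where "q2 = t + P - r + 2*r*real (Suc N)"
  have o1: "A \<le> q1" "q1 \<le> q2" "q2 \<le> B"
    using t r unfolding q1_def q2_def A_def B_def Q_def by (auto simp: algebra_simps)
  have split: "integral {A..B} f = integral {A..q1} f + integral {q1..q2} f + integral {q2..B} f"
  proof -
    have "integral {A..B} f = integral {A..q1} f + integral {q1..B} f"
      using Henstock_Kurzweil_Integration.integral_combine[of A q1 B f] o1 fi by simp
    moreover have "integral {q1..B} f = integral {q1..q2} f + integral {q2..B} f"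
      using Henstock_Kurzweil_Integration.integral_combine[of q1 q2 B f] o1 fi by simp
    ultimately show ?thesis by simp
  qed
  have J1: "integral {A..q1} f \<le> \<eta> * (t + r)"
  proof -
    have "AE x in lebesgue. x \<in> {A..q1} \<longrightarrow> f x \<le> \<eta>"
      using uL AE_neq_point[of q1]
    proof (rule eventually_elim2)
      fix x assume H: "x < -M \<longrightarrow> \<bar>u x + 1\<bar> < \<epsilon>" and xq: "x \<noteq> q1"
      show "x \<in> {A..q1} \<longrightarrow> f x \<le> \<eta>"
      proof
        assume "x \<in> {A..q1}"
        then have x: "x < q1" using xq by auto
        then have "w t x = u x" unfolding q1_def by (rule w_left)
        moreover have "x < -M" using x t PM unfolding q1_def by linarith
        ultimately show "f x \<le> \<eta>" using H WL unfolding f_def by auto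
      qed
    qed
    from int_piece_bound[OF fi o1(1) this] show ?thesis unfolding q1_def A_def by (simp add: algebra_simps)
  qed
  have J3: "integral {q2..B} f \<le> \<eta> * (3*r - t)"
  proof -
    have QM: "M < Q" using Q2 unfolding Q_def .
    have "AE x in lebesgue. x \<in> {q2..B} \<longrightarrow> f x \<le> \<eta>"
      using uR
    proof (rule eventually_mono)
      fix x assume H: "x > M \<longrightarrow> \<bar>u x - 1\<bar> < \<epsilon>"
      show "x \<in> {q2..B} \<longrightarrow> f x \<le> \<eta>"
      proof
        assume "x \<in> {q2..B}"
        then have x: "t + Q + r \<le> x" unfolding q2_def Q_def by (simp add: algebra_simps)
        then have "w t x = u x" by (rule w_right)
        moreover have "x > M" using x t QM r by linarith
        ultimately show "f x \<le> \<eta>" using H WR unfolding f_def by auto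
      qed
    qed
    from int_piece_bound[OF fi o1(3) this] show ?thesis
      unfolding q2_def B_def Q_def by (simp add: algebra_simps)
  qed
  have J2: "integral {q1..q2} f \<le> 2*r * (\<Sum>k<Suc N. W (c k t))"
  proof -
    have "integral {q1..q2} f = (\<Sum>k<Suc N. integral {q1 + 2*r*real k..q1 + 2*r*real (Suc k)} f)"
      unfolding q2_def q1_def using int_split[of f "t+P-r" "2*r" "Suc N"] fi r by simp
    also have "\<dots> \<le> (\<Sum>k<Suc N. W (c k t) * (2*r))"
    proof (rule sum_mono)
      fix k assume k: "k \<in> {..<Suc N}"
      have le: "q1 + 2*r*real k \<le> q1 + 2*r*real (Suc k)" using r by simp
      have "AE x in lebesgue. x \<in> {q1 + 2*r*real k..q1 + 2*r*real (Suc k)} \<longrightarrow> f x \<le> W (c k t)"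
        using AE_neq_point[of "q1 + 2*r*real (Suc k)"]
      proof (rule eventually_mono)
        fix x assume xq: "x \<noteq> q1 + 2*r*real (Suc k)"
        show "x \<in> {q1 + 2*r*real k..q1 + 2*r*real (Suc k)} \<longrightarrow> f x \<le> W (c k t)"
        proof
          assume "x \<in> {q1 + 2*r*real k..q1 + 2*r*real (Suc k)}"
          then have "t+P+2*r*real k - r \<le> x" "x < t+P+2*r*real k + r"
            using xq unfolding q1_def by (auto simp: algebra_simps)
          then have "w t x = c k t" using w_cell[of k t x] k by auto
          then show "f x \<le> W (c k t)" unfolding f_def by simp
        qed
      qed
      from int_piece_bound[OF fi le this]
      show "integral {q1 + 2*r*real k..q1 + 2*r*real (Suc k)} f \<le> W (c k t) * (2*r)"
        by (simp add: algebra_simps)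
    qed
    also have "\<dots> = 2*r * (\<Sum>k<Suc N. W (c k t))"
      by (simp only: sum_distrib_left mult.commute)
    finally show ?thesis .
  qed
  show ?thesis using split J1 J2 J3 unfolding f_def by linarith
qed

definition "H t = 1 / (2 * r\<^sup>2) * ((2*\<epsilon>)\<^sup>2 * t + (\<bar>c 0 t + 1\<bar> + 2*\<epsilon>)\<^sup>2 * (2*r)
       + 2*r * (\<Sum>k<N. (c (Suc k) t - c k t)\<^sup>2)
       + (\<bar>c N t - 1\<bar> + 2*\<epsilon>)\<^sup>2 * (2*r) + (2*\<epsilon>)\<^sup>2 * (2*r - t))
    + (\<eta> * (t + r) + 2*r * (\<Sum>k<Suc N. W (c k t)) + \<eta> * (3*r - t))"

lemma Ew_bound:
  assumes t: "0 \<le> t" "t \<le> 2*r"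
  shows "Een r W A B (w t) \<le> H t"
proof -
  have "1 / (2 * r\<^sup>2) * integral {A..B} (\<lambda>x. (osc_on {x-r<..<x+r} (w t))\<^sup>2)
      \<le> 1 / (2 * r\<^sup>2) * ((2*\<epsilon>)\<^sup>2 * t + (\<bar>c 0 t + 1\<bar> + 2*\<epsilon>)\<^sup>2 * (2*r)
       + 2*r * (\<Sum>k<N. (c (Suc k) t - c k t)\<^sup>2)
       + (\<bar>c N t - 1\<bar> + 2*\<epsilon>)\<^sup>2 * (2*r) + (2*\<epsilon>)\<^sup>2 * (2*r - t))"
    by (rule mult_left_mono[OF osc_int_bound[OF t]]) simp
  with W_int_bound[OF t] show ?thesis
    unfolding Een_integral[OF w_Linfty Wc r] H_def by linarith
qed

lemma Eu_bound:
  assumes lm: "local_minimizer (Een r W) r u" and t: "0 \<le> t" "t \<le> 2*r"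
  shows "Een r W A B u \<le> H t"
proof -
  have AB: "A < B" unfolding A_def B_def Q_def using r by (simp add: add_pos_nonneg)
  have "Een r W A B u \<le> Een r W A B (w t)"
    using lm AB w_Linfty w_out[OF t] unfolding local_minimizer_def by (simp add: AE_I2)
  also have "\<dots> \<le> H t" by (rule Ew_bound[OF t])
  finally show ?thesis .
qed

end



lemma Linfty_sum:
  assumes "finite I" "\<And>i. i \<in> I \<Longrightarrow> f i \<in> Linfty_loc"
  shows "(\<lambda>x. \<Sum>i\<in>I. f i x) \<in> Linfty_loc"
  using assms
proof (induction I rule: finite_induct)
  case empty then show ?case using Linfty_const[of 0] by simp
next
  case (insert i I)
  have "(\<lambda>x. f i x + (\<Sum>i\<in>I. f i x)) \<in> Linfty_loc"
    by (rule Linfty_add) (use insert in auto)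
  then show ?case using insert by simp
qed

lemma sq_of_abs: "\<bar>z::real\<bar> \<le> e \<Longrightarrow> z\<^sup>2 \<le> e\<^sup>2"
  by (metis abs_ge_zero power2_abs power_mono)

context constr
begin

lemma c_L: "(\<lambda>t. c k t) \<in> Linfty_loc"
proof -
  have "(\<lambda>t. v (t + (P + 2*r*real k))) \<in> Linfty_loc" by (rule Linfty_shift[OF v])
  then show ?thesis unfolding c_def by (simp add: add.assoc)
qed

definition "K0 = 20*\<epsilon>\<^sup>2/r + 4*r*\<eta>"

definition "H2 t = K0 + 2/r*(c 0 t + 1)\<^sup>2 + 1/r*(\<Sum>k<N. (c (Suc k) t - c k t)\<^sup>2)
   + 2/r*(c N t - 1)\<^sup>2 + 2*r*(\<Sum>k<Suc N. W (c k t))"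

lemma H_alg:
  "1 / (2 * r\<^sup>2) * (e*t + X*(2*r) + 2*r*S + Y*(2*r) + e*(2*r - t)) + (\<eta>*(t+r) + 2*r*T + \<eta>*(3*r - t))
   = e/r + X/r + S/r + Y/r + 4*r*\<eta> + 2*r*T"
  using r by (simp add: field_simps power2_eq_square)

lemma H_le_H2: "H t \<le> H2 t"
proof -
  have sq: "(\<bar>z\<bar> + 2*\<epsilon>)\<^sup>2 \<le> 2*z\<^sup>2 + 8*\<epsilon>\<^sup>2" for z
  proof -
    have "0 \<le> (\<bar>z\<bar> - 2*\<epsilon>)\<^sup>2" by simp
    then show ?thesis by (simp add: power2_eq_square algebra_simps)
  qed
  have d: "X \<le> X' \<Longrightarrow> X / r \<le> X' / r" for X X' using r by (simp add: divide_right_mono)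
  have "H t = (2*\<epsilon>)\<^sup>2/r + (\<bar>c 0 t + 1\<bar> + 2*\<epsilon>)\<^sup>2/r + (\<Sum>k<N. (c (Suc k) t - c k t)\<^sup>2)/r
      + (\<bar>c N t - 1\<bar> + 2*\<epsilon>)\<^sup>2/r + 4*r*\<eta> + 2*r*(\<Sum>k<Suc N. W (c k t))"
    unfolding H_def by (rule H_alg)
  also have "\<dots> \<le> (2*\<epsilon>)\<^sup>2/r + (2*(c 0 t + 1)\<^sup>2 + 8*\<epsilon>\<^sup>2)/r + (\<Sum>k<N. (c (Suc k) t - c k t)\<^sup>2)/r
      + (2*(c N t - 1)\<^sup>2 + 8*\<epsilon>\<^sup>2)/r + 4*r*\<eta> + 2*r*(\<Sum>k<Suc N. W (c k t))"
    using d[OF sq[of "c 0 t + 1"]] d[OF sq[of "c N t - 1"]] by linarith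
  also have "\<dots> = H2 t"
    unfolding H2_def K0_def using r by (simp add: field_simps power2_eq_square)
  finally show ?thesis .
qed

lemma g0_L: "(\<lambda>t. (c 0 t + 1)\<^sup>2) \<in> Linfty_loc"
  by (intro Linfty_square Linfty_add c_L Linfty_const)
lemma gN_L: "(\<lambda>t. (c N t - 1)\<^sup>2) \<in> Linfty_loc"
  by (intro Linfty_square Linfty_diff c_L Linfty_const)
lemma S1_L: "(\<lambda>t. \<Sum>k<N. (c (Suc k) t - c k t)\<^sup>2) \<in> Linfty_loc"
  by (rule Linfty_sum) (auto intro!: Linfty_square Linfty_diff c_L)
lemma S2_L: "(\<lambda>t. \<Sum>k<Suc N. W (c k t)) \<in> Linfty_loc"
  by (rule Linfty_sum) (auto intro: Linfty_comp[OF c_L Wc])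

lemma H2_L: "H2 \<in> Linfty_loc"
  unfolding H2_def[abs_def]
  by (intro Linfty_add Linfty_mult Linfty_const g0_L gN_L S1_L S2_L)

lemma H2_integral:
  "integral {0..2*r} H2 = 2*r*K0 + 2/r * integral {0..2*r} (\<lambda>t. (c 0 t + 1)\<^sup>2)
     + 1/r * integral {0..2*r} (\<lambda>t. \<Sum>k<N. (c (Suc k) t - c k t)\<^sup>2)
     + 2/r * integral {0..2*r} (\<lambda>t. (c N t - 1)\<^sup>2)
     + 2*r * integral {0..2*r} (\<lambda>t. \<Sum>k<Suc N. W (c k t))"
proof -
  let ?S = "{0..2*r}"
  define f1 where "f1 = (\<lambda>t. K0 + 2/r*(c 0 t + 1)\<^sup>2)"
  define f2 where "f2 = (\<lambda>t. f1 t + 1/r*(\<Sum>k<N. (c (Suc k) t - c k t)\<^sup>2))"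
  define f3 where "f3 = (\<lambda>t. f2 t + 2/r*(c N t - 1)\<^sup>2)"
  have L1: "f1 \<in> Linfty_loc" unfolding f1_def by (intro Linfty_add Linfty_mult Linfty_const g0_L)
  have L2: "f2 \<in> Linfty_loc" unfolding f2_def by (intro Linfty_add Linfty_mult Linfty_const S1_L L1)
  have L3: "f3 \<in> Linfty_loc" unfolding f3_def by (intro Linfty_add Linfty_mult Linfty_const gN_L L2)
  have i: "f integrable_on ?S" if "f \<in> Linfty_loc" for f using Linfty_integrable_on[OF that] .
  have "integral ?S H2 = integral ?S (\<lambda>t. f3 t + 2*r*(\<Sum>k<Suc N. W (c k t)))"
    unfolding H2_def f3_def f2_def f1_def by simp
  also have "\<dots> = integral ?S f3 + 2*r * integral ?S (\<lambda>t. \<Sum>k<Suc N. W (c k t))"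
    by (subst integral_add[OF i[OF L3] i[OF Linfty_mult[OF Linfty_const S2_L]]]) simp
  also have "integral ?S f3 = integral ?S f2 + 2/r * integral ?S (\<lambda>t. (c N t - 1)\<^sup>2)"
    unfolding f3_def by (subst integral_add[OF i[OF L2] i[OF Linfty_mult[OF Linfty_const gN_L]]]) simp
  also have "integral ?S f2 = integral ?S f1 + 1/r * integral ?S (\<lambda>t. \<Sum>k<N. (c (Suc k) t - c k t)\<^sup>2)"
    unfolding f2_def by (subst integral_add[OF i[OF L1] i[OF Linfty_mult[OF Linfty_const S1_L]]]) simp
  also have "integral ?S f1 = 2*r*K0 + 2/r * integral ?S (\<lambda>t. (c 0 t + 1)\<^sup>2)"
    unfolding f1_def using r by (subst integral_add[OF i[OF Linfty_const] i[OF Linfty_mult[OF Linfty_const g0_L]]]) simp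
  finally show ?thesis .
qed

end



context constr
begin

lemma B0: "integral {0..2*r} (\<lambda>t. (c 0 t + 1)\<^sup>2) \<le> \<epsilon>\<^sup>2 * (2*r)"
proof -
  have "AE y in lebesgue. y \<le> P + 2*r \<longrightarrow> (v y + 1)\<^sup>2 \<le> \<epsilon>\<^sup>2"
    using vu uL
  proof (rule eventually_elim2)
    fix y assume h1: "y \<notin> {a+r..b-r} \<longrightarrow> v y = u y" and h2: "y < -M \<longrightarrow> \<bar>u y + 1\<bar> < \<epsilon>"
    show "y \<le> P + 2*r \<longrightarrow> (v y + 1)\<^sup>2 \<le> \<epsilon>\<^sup>2"
    proof
      assume y: "y \<le> P + 2*r"
      then have "y \<notin> {a+r..b-r}" "y < -M" using P1 P2 r by auto
      then have "\<bar>v y + 1\<bar> \<le> \<epsilon>" using h1 h2 by auto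
      then show "(v y + 1)\<^sup>2 \<le> \<epsilon>\<^sup>2" by (rule sq_of_abs)
    qed
  qed
  from AE_shift[OF this, of P]
  have "AE t in lebesgue. t \<in> {0..2*r} \<longrightarrow> (c 0 t + 1)\<^sup>2 \<le> \<epsilon>\<^sup>2"
    by (rule eventually_mono) (auto simp: c_def)
  from int_piece_bound[OF Linfty_integrable_on[OF g0_L] _ this] r show ?thesis by simp
qed

lemma BN: "integral {0..2*r} (\<lambda>t. (c N t - 1)\<^sup>2) \<le> \<epsilon>\<^sup>2 * (2*r)"
proof -
  have QM: "M < Q" using Q2 unfolding Q_def .
  have Qb: "b \<le> Q" using Q1 unfolding Q_def .
  have "AE y in lebesgue. Q \<le> y \<longrightarrow> (v y - 1)\<^sup>2 \<le> \<epsilon>\<^sup>2"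
    using vu uR
  proof (rule eventually_elim2)
    fix y assume h1: "y \<notin> {a+r..b-r} \<longrightarrow> v y = u y" and h2: "y > M \<longrightarrow> \<bar>u y - 1\<bar> < \<epsilon>"
    show "Q \<le> y \<longrightarrow> (v y - 1)\<^sup>2 \<le> \<epsilon>\<^sup>2"
    proof
      assume y: "Q \<le> y"
      then have "y \<notin> {a+r..b-r}" "y > M" using QM Qb r by auto
      then have "\<bar>v y - 1\<bar> \<le> \<epsilon>" using h1 h2 by auto
      then show "(v y - 1)\<^sup>2 \<le> \<epsilon>\<^sup>2" by (rule sq_of_abs)
    qed
  qed
  from AE_shift[OF this, of Q]
  have "AE t in lebesgue. t \<in> {0..2*r} \<longrightarrow> (c N t - 1)\<^sup>2 \<le> \<epsilon>\<^sup>2"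
    by (rule eventually_mono) (auto simp: c_def Q_def add.assoc)
  from int_piece_bound[OF Linfty_integrable_on[OF gN_L] _ this] r show ?thesis by simp
qed

lemma B1: "integral {0..2*r} (\<lambda>t. \<Sum>k<N. (c (Suc k) t - c k t)\<^sup>2)
    \<le> integral {A..B} (\<lambda>x. (v (x + r) - v (x - r))\<^sup>2)"
proof -
  define g where "g y = (v (y + 2*r) - v y)\<^sup>2" for y
  have gL: "g \<in> Linfty_loc" unfolding g_def[abs_def]
    by (intro Linfty_square Linfty_diff Linfty_shift v)
  define G where "G x = (v (x + r) - v (x - r))\<^sup>2" for x
  have GL: "G \<in> Linfty_loc" unfolding G_def[abs_def]
    using Linfty_square[OF Linfty_diff[OF Linfty_shift[OF v, of r] Linfty_shift[OF v, of "-r"]]] by simp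
  have trm: "integral {0..2*r} (\<lambda>t. (c (Suc k) t - c k t)\<^sup>2)
      = integral {P + 2*r*real k..P + 2*r*real (Suc k)} g" for k
  proof -
    have "(\<lambda>t. (c (Suc k) t - c k t)\<^sup>2) = (\<lambda>t. g (t + (P + 2*r*real k)))"
      by (auto simp: c_def g_def algebra_simps)
    then show ?thesis using int_shift[of 0 "2*r" g "P + 2*r*real k"] by (simp add: algebra_simps)
  qed
  have "integral {0..2*r} (\<lambda>t. \<Sum>k<N. (c (Suc k) t - c k t)\<^sup>2)
      = (\<Sum>k<N. integral {0..2*r} (\<lambda>t. (c (Suc k) t - c k t)\<^sup>2))"
    by (rule Henstock_Kurzweil_Integration.integral_sum)
       (auto intro!: Linfty_integrable_on Linfty_square Linfty_diff c_L)
  also have "\<dots> = (\<Sum>k<N. integral {P + 2*r*real k..P + 2*r*real (Suc k)} g)"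
    using trm by simp
  also have "\<dots> = integral {P..P + 2*r*real N} g"
    using int_split[where f=g and p=P and h="2*r" and N=N] Linfty_integrable_on[OF gL] r by simp
  also have "\<dots> = integral {P + r..P + 2*r*real N + r} G"
  proof -
    have "(\<lambda>x. g (x + - r)) = G" by (auto simp: g_def G_def fun_eq_iff algebra_simps)
    then show ?thesis using int_shift[of "P + r" "P + 2*r*real N + r" g "-r"] by simp
  qed
  also have "\<dots> \<le> integral {A..B} G"
  proof (rule integral_subset_le)
    show "{P + r..P + 2*r*real N + r} \<subseteq> {A..B}"
      using r unfolding A_def B_def Q_def by auto
  qed (auto intro!: Linfty_integrable_on GL simp: G_def)
  finally show ?thesis unfolding G_def .
qed

lemma B2: "integral {0..2*r} (\<lambda>t. \<Sum>k<Suc N. W (c k t)) \<le> integral {A..B} (\<lambda>x. W (v x))"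
proof -
  define g where "g y = W (v y)" for y
  have gL: "g \<in> Linfty_loc" unfolding g_def[abs_def] by (rule Linfty_comp[OF v Wc])
  have trm: "integral {0..2*r} (\<lambda>t. W (c k t)) = integral {P + 2*r*real k..P + 2*r*real (Suc k)} g" for k
  proof -
    have "(\<lambda>t. W (c k t)) = (\<lambda>t. g (t + (P + 2*r*real k)))"
      by (auto simp: c_def g_def algebra_simps)
    then show ?thesis using int_shift[of 0 "2*r" g "P + 2*r*real k"] by (simp add: algebra_simps)
  qed
  have "integral {0..2*r} (\<lambda>t. \<Sum>k<Suc N. W (c k t)) = (\<Sum>k<Suc N. integral {0..2*r} (\<lambda>t. W (c k t)))"
    by (rule Henstock_Kurzweil_Integration.integral_sum)
       (auto intro!: Linfty_integrable_on Linfty_comp[OF c_L Wc])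
  also have "\<dots> = (\<Sum>k<Suc N. integral {P + 2*r*real k..P + 2*r*real (Suc k)} g)"
    using trm by simp
  also have "\<dots> = integral {P..P + 2*r*real (Suc N)} g"
    using int_split[where f=g and p=P and h="2*r" and N="Suc N"] Linfty_integrable_on[OF gL] r by simp
  also have "\<dots> \<le> integral {A..B} g"
  proof (rule integral_subset_le)
    show "{P..P + 2*r*real (Suc N)} \<subseteq> {A..B}"
      using r unfolding A_def B_def Q_def by (auto simp: algebra_simps)
  qed (auto intro!: Linfty_integrable_on gL simp: g_def W0)
  finally show ?thesis unfolding g_def .
qed

lemma E_le_F:
  assumes lm: "local_minimizer (Een r W) r u"
  shows "Een r W A B u \<le> Fen r W A B v + 24*\<epsilon>\<^sup>2/r + 4*r*\<eta>"
proof -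
  let ?E = "Een r W A B u"
  have H2i: "H2 integrable_on {0..2*r}" by (rule Linfty_integrable_on[OF H2_L])
  have "integral {0..2*r} (\<lambda>t. ?E) \<le> integral {0..2*r} H2"
    by (rule integral_le[OF _ H2i]) (auto intro: order_trans[OF Eu_bound[OF lm] H_le_H2])
  then have 1: "2*r*?E \<le> integral {0..2*r} H2" using r by simp
  define IF where "IF = integral {A..B} (\<lambda>x. (v (x + r) - v (x - r))\<^sup>2)"
  define IW where "IW = integral {A..B} (\<lambda>x. W (v x))"
  have F: "Fen r W A B v = 1 / (2 * r\<^sup>2) * IF + IW" unfolding IF_def IW_def by (rule Fen_integral[OF v Wc])
  have "integral {0..2*r} H2 \<le> 2*r*K0 + 2/r * (\<epsilon>\<^sup>2 * (2*r)) + 1/r * IF + 2/r * (\<epsilon>\<^sup>2 * (2*r)) + 2*r * IW"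
  proof -
    have m1: "2/r * integral {0..2*r} (\<lambda>t. (c 0 t + 1)\<^sup>2) \<le> 2/r * (\<epsilon>\<^sup>2 * (2*r))"
      by (rule mult_left_mono[OF B0]) (use r in simp)
    have m2: "2/r * integral {0..2*r} (\<lambda>t. (c N t - 1)\<^sup>2) \<le> 2/r * (\<epsilon>\<^sup>2 * (2*r))"
      by (rule mult_left_mono[OF BN]) (use r in simp)
    have m3: "1/r * integral {0..2*r} (\<lambda>t. \<Sum>k<N. (c (Suc k) t - c k t)\<^sup>2) \<le> 1/r * IF"
      unfolding IF_def by (rule mult_left_mono[OF B1]) (use r in simp)
    have m4: "2*r * integral {0..2*r} (\<lambda>t. \<Sum>k<Suc N. W (c k t)) \<le> 2*r * IW"
      unfolding IW_def by (rule mult_left_mono[OF B2]) (use r in simp)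
    show ?thesis unfolding H2_integral using m1 m2 m3 m4 by linarith
  qed
  also have "\<dots> = 2*r * (Fen r W A B v + 24*\<epsilon>\<^sup>2/r + 4*r*\<eta>)"
    unfolding F K0_def using r by (simp add: field_simps power2_eq_square)
  finally have "2*r*?E \<le> 2*r*(Fen r W A B v + 24*\<epsilon>\<^sup>2/r + 4*r*\<eta>)" using 1 by linarith
  then show ?thesis by (rule mult_left_le_imp_le) (use r in simp)
qed

end



lemma int_le_AE:
  fixes f g :: "real \<Rightarrow> real"
  assumes f: "f integrable_on S" and g: "g integrable_on S"
    and H: "AE x in lebesgue. x \<in> S \<longrightarrow> f x \<le> g x"
  shows "integral S f \<le> integral S g"
proof -
  define N where "N = {x. \<not> (x \<in> S \<longrightarrow> f x \<le> g x)}"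
  have N: "negligible N" unfolding N_def by (rule AE_negligible[OF H])
  define h where "h x = (if x \<in> N then f x else g x)" for x
  have eq: "integral S g = integral S h"
    by (rule integral_spike[OF N]) (simp add: h_def)
  have hi: "h integrable_on S"
    by (rule integrable_spike[OF g N]) (simp add: h_def)
  have "integral S f \<le> integral S h"
    by (rule integral_le[OF f hi]) (auto simp: h_def N_def)
  then show ?thesis using eq by simp
qed

lemma int_eq_AE:
  fixes f g :: "real \<Rightarrow> real"
  assumes H: "AE x in lebesgue. x \<in> S \<longrightarrow> f x = g x"
  shows "integral S f = integral S g"
proof -
  define N where "N = {x. \<not> (x \<in> S \<longrightarrow> f x = g x)}"
  have N: "negligible N" unfolding N_def by (rule AE_negligible[OF H])
  show ?thesis by (rule integral_spike[OF N]) (auto simp: N_def)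
qed

lemma Fen_le_Een:
  assumes u: "u \<in> Linfty_loc" and r: "r > 0" and W: "continuous_on UNIV W"
  shows "Fen r W A B u \<le> Een r W A B u"
proof -
  have L1: "(\<lambda>x. (u (x + r) - u (x - r))\<^sup>2) \<in> Linfty_loc"
    using Linfty_square[OF Linfty_diff[OF Linfty_shift[OF u, of r] Linfty_shift[OF u, of "-r"]]] by simp
  have L2: "(\<lambda>x. (osc_on {x-r<..<x+r} u)\<^sup>2) \<in> Linfty_loc"
    by (intro Linfty_square osc_Linfty u r)
  have "integral {A..B} (\<lambda>x. (u (x + r) - u (x - r))\<^sup>2) \<le> integral {A..B} (\<lambda>x. (osc_on {x-r<..<x+r} u)\<^sup>2)"
    by (rule int_le_AE[OF Linfty_integrable_on[OF L1] Linfty_integrable_on[OF L2]])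
       (rule eventually_mono[OF F_le_E_pointwise[OF u r]], use sq_of_abs in blast)
  then have "1 / (2 * r\<^sup>2) * integral {A..B} (\<lambda>x. (u (x + r) - u (x - r))\<^sup>2)
      \<le> 1 / (2 * r\<^sup>2) * integral {A..B} (\<lambda>x. (osc_on {x-r<..<x+r} u)\<^sup>2)"
    by (rule mult_left_mono) simp
  then show ?thesis unfolding Fen_integral[OF u W] Een_integral[OF u W r] by simp
qed

lemma Fen_diff:
  assumes u: "u \<in> Linfty_loc" and v: "v \<in> Linfty_loc" and r: "r > 0" and W: "continuous_on UNIV W"
    and Aa: "A \<le> a" and ab: "a \<le> b" and bB: "b \<le> B"
    and vu: "AE x in lebesgue. x \<notin> {a+r..b-r} \<longrightarrow> v x = u x"
  shows "Fen r W A B u - Fen r W A B v = Fen r W a b u - Fen r W a b v"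
proof -
  define fu where "fu x = (u (x + r) - u (x - r))\<^sup>2" for x
  define fv where "fv x = (v (x + r) - v (x - r))\<^sup>2" for x
  define gu where "gu x = W (u x)" for x
  define gv where "gv x = W (v x)" for x
  have Lf: "(\<lambda>x. (w (x + r) - w (x - r))\<^sup>2) \<in> Linfty_loc" if "w \<in> Linfty_loc" for w
    using Linfty_square[OF Linfty_diff[OF Linfty_shift[OF that, of r] Linfty_shift[OF that, of "-r"]]] by simp
  have iu: "fu integrable_on {p..q}" "gu integrable_on {p..q}" for p q
    unfolding fu_def[abs_def] gu_def[abs_def]
    by (rule Linfty_integrable_on, rule Lf[OF u]) (rule Linfty_integrable_on, rule Linfty_comp[OF u W])
  have iv: "fv integrable_on {p..q}" "gv integrable_on {p..q}" for p q
    unfolding fv_def[abs_def] gv_def[abs_def]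
    by (rule Linfty_integrable_on, rule Lf[OF v]) (rule Linfty_integrable_on, rule Linfty_comp[OF v W])
  have split: "integral {A..B} f = integral {A..a} f + integral {a..b} f + integral {b..B} f"
    if fi: "\<And>p q. f integrable_on {p..q}" for f :: "real \<Rightarrow> real"
  proof -
    have "integral {A..B} f = integral {A..a} f + integral {a..B} f"
      using Henstock_Kurzweil_Integration.integral_combine[of A a B f] Aa ab bB fi by simp
    moreover have "integral {a..B} f = integral {a..b} f + integral {b..B} f"
      using Henstock_Kurzweil_Integration.integral_combine[of a b B f] ab bB fi by simp
    ultimately show ?thesis by simp
  qed
  have s1: "AE x in lebesgue. x + r \<notin> {a+r..b-r} \<longrightarrow> v (x + r) = u (x + r)"
    by (rule AE_shift[OF vu])
  have s2: "AE x in lebesgue. x + - r \<notin> {a+r..b-r} \<longrightarrow> v (x + - r) = u (x + - r)"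
    by (rule AE_shift[OF vu])
  have eqL: "AE x in lebesgue. x \<in> {A..a} \<longrightarrow> fu x = fv x \<and> gu x = gv x"
    using s1 s2 vu AE_neq_point[of a]
  proof eventually_elim
    case (elim x)
    show ?case
    proof
      assume "x \<in> {A..a}"
      then have x: "x < a" using elim(4) by auto
      then show "fu x = fv x \<and> gu x = gv x" using elim(1-3) r
        unfolding fu_def fv_def gu_def gv_def by auto
    qed
  qed
  have eqR: "AE x in lebesgue. x \<in> {b..B} \<longrightarrow> fu x = fv x \<and> gu x = gv x"
    using s1 s2 vu AE_neq_point[of b]
  proof eventually_elim
    case (elim x)
    show ?case
    proof
      assume "x \<in> {b..B}"
      then have x: "x > b" using elim(4) by auto
      then show "fu x = fv x \<and> gu x = gv x" using elim(1-3) r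
        unfolding fu_def fv_def gu_def gv_def by auto
    qed
  qed
  have e1: "integral {A..a} fu = integral {A..a} fv" by (rule int_eq_AE) (use eqL in \<open>auto elim: eventually_mono\<close>)
  have e2: "integral {A..a} gu = integral {A..a} gv" by (rule int_eq_AE) (use eqL in \<open>auto elim: eventually_mono\<close>)
  have e3: "integral {b..B} fu = integral {b..B} fv" by (rule int_eq_AE) (use eqR in \<open>auto elim: eventually_mono\<close>)
  have e4: "integral {b..B} gu = integral {b..B} gv" by (rule int_eq_AE) (use eqR in \<open>auto elim: eventually_mono\<close>)
  have F: "Fen r W p q w = 1 / (2 * r\<^sup>2) * integral {p..q} (\<lambda>x. (w (x + r) - w (x - r))\<^sup>2) + integral {p..q} (\<lambda>x. W (w x))"
    if "w \<in> Linfty_loc" for p q w using Fen_integral[OF that W] .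
  show ?thesis
    unfolding F[OF u] F[OF v]
    using split[OF iu(1)] split[OF iu(2)] split[OF iv(1)] split[OF iv(2)] e1 e2 e3 e4
    unfolding fu_def[abs_def] fv_def[abs_def] gu_def[abs_def] gv_def[abs_def]
    by (simp add: algebra_simps)
qed

context constr
begin

lemma F_ab:
  assumes lm: "local_minimizer (Een r W) r u"
  shows "Fen r W a b u \<le> Fen r W a b v + 24*\<epsilon>\<^sup>2/r + 4*r*\<eta>"
proof -
  have Aa: "A \<le> a" using P2 r unfolding A_def by simp
  have bB: "b \<le> B" using Q1 r unfolding B_def Q_def by simp
  have "Fen r W A B u \<le> Een r W A B u" by (rule Fen_le_Een[OF u r Wc])
  also have "\<dots> \<le> Fen r W A B v + 24*\<epsilon>\<^sup>2/r + 4*r*\<eta>" by (rule E_le_F[OF lm])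
  finally show ?thesis
    using Fen_diff[OF u v r Wc Aa less_imp_le[OF ab] bB vu] by linarith
qed

end



theorem proposition4p2:
  fixes r :: real and W u :: "real \<Rightarrow> real"
  assumes "r > 0"
    and "hyp_H W"
    and "u \<in> Linfty_loc"
    and "local_minimizer (Een r W) r u"
    and "\<forall>e>0. \<exists>M. AE x in lebesgue. x > M \<longrightarrow> \<bar>u x - 1\<bar> < e"
    and "\<forall>e>0. \<exists>M. AE x in lebesgue. x < M \<longrightarrow> \<bar>u x + 1\<bar> < e"
  shows "local_minimizer (Fen r W) r u"
proof -
  have r: "r > 0" by fact
  have Wc: "continuous_on UNIV W" and W1: "W 1 = 0" and Wm1: "W (-1) = 0"
    and Wpos: "\<And>t. t \<noteq> 1 \<and> t \<noteq> -1 \<Longrightarrow> W t > 0"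
    using assms(2) unfolding hyp_H_def by auto
  have W0: "W s \<ge> 0" for s
    using Wpos[of s] W1 Wm1 by (cases "s = 1 \<or> s = -1") auto
  show ?thesis unfolding local_minimizer_def
  proof (intro allI impI)
    fix a b v
    assume ab: "a < b" and v: "v \<in> Linfty_loc"
      and vu: "AE x in lebesgue. x \<notin> {a + r..b - r} \<longrightarrow> v x = u x"
    show "Fen r W a b u \<le> Fen r W a b v"
    proof (rule field_le_epsilon)
      fix e :: real assume e: "e > 0"
      define \<eta> where "\<eta> = e / (8*r)"
      have eta: "\<eta> > 0" unfolding \<eta>_def using e r by simp
      obtain d1 where d1: "d1 > 0" "\<And>s. dist s 1 < d1 \<Longrightarrow> dist (W s) (W 1) < \<eta>"
        using Wc eta unfolding continuous_on_iff by (meson UNIV_I)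
      obtain d2 where d2: "d2 > 0" "\<And>s. dist s (-1) < d2 \<Longrightarrow> dist (W s) (W (-1)) < \<eta>"
        using Wc eta unfolding continuous_on_iff by (meson UNIV_I)
      define \<epsilon> where "\<epsilon> = min (min d1 d2) (min 1 (e*r/48))"
      have eps: "\<epsilon> > 0" unfolding \<epsilon>_def using d1 d2 e r by simp
      have WR: "W s \<le> \<eta>" if "\<bar>s - 1\<bar> < \<epsilon>" for s
      proof -
        have "dist s 1 < d1" using that unfolding \<epsilon>_def dist_real_def by simp
        then show ?thesis using d1(2)[of s] W1 unfolding dist_real_def by simp
      qed
      have WL: "W s \<le> \<eta>" if "\<bar>s + 1\<bar> < \<epsilon>" for s
      proof -
        have "dist s (-1) < d2" using that unfolding \<epsilon>_def dist_real_def by simp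
        then show ?thesis using d2(2)[of s] Wm1 unfolding dist_real_def by simp
      qed
      obtain M1 where M1: "AE x in lebesgue. x > M1 \<longrightarrow> \<bar>u x - 1\<bar> < \<epsilon>" using assms(5) eps by blast
      obtain M2 where M2: "AE x in lebesgue. x < M2 \<longrightarrow> \<bar>u x + 1\<bar> < \<epsilon>" using assms(6) eps by blast
      define M where "M = max M1 (- M2)"
      have uR: "AE x in lebesgue. x > M \<longrightarrow> \<bar>u x - 1\<bar> < \<epsilon>"
        using M1 by (rule eventually_mono) (auto simp: M_def)
      have uL: "AE x in lebesgue. x < -M \<longrightarrow> \<bar>u x + 1\<bar> < \<epsilon>"
        using M2 by (rule eventually_mono) (auto simp: M_def)
      define P where "P = min a (-M) - 2*r - 1"
      define z where "z = (max b M - P) / (2*r)"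
      define N where "N = nat \<lceil>z\<rceil> + 1"
      have "real (nat \<lceil>z\<rceil>) \<ge> z" by linarith
      then have "real N \<ge> z + 1" unfolding N_def by simp
      then have "2*r*real N \<ge> 2*r*(z+1)" using r by (simp add: mult_left_mono)
      also have "2*r*(z+1) = max b M - P + 2*r" unfolding z_def using r by (simp add: field_simps)
      finally have NN: "max b M < P + 2*r*real N" using r by linarith
      interpret constr r W u v a b M \<epsilon> \<eta> P N
      proof
        show "P + 2*r < -M" "P + 2*r < a" unfolding P_def by auto
        show "b \<le> P + 2*r*real N" "M < P + 2*r*real N" using NN by auto
      qed (use r Wc W0 assms(3) v eps eta uR uL WR WL ab vu in auto)
      have "Fen r W a b u \<le> Fen r W a b v + 24*\<epsilon>\<^sup>2/r + 4*r*\<eta>" by (rule F_ab[OF assms(4)])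
      moreover have "24*\<epsilon>\<^sup>2/r \<le> e/2"
      proof -
        have "\<epsilon> \<le> 1" "\<epsilon> \<le> e*r/48" unfolding \<epsilon>_def by auto
        then have "\<epsilon>\<^sup>2 \<le> e*r/48" using eps by (simp add: power2_eq_square) (smt (verit) mult_left_le)
        then have "24*\<epsilon>\<^sup>2 \<le> e/2*r" by simp
        then show ?thesis using r by (simp add: pos_divide_le_eq)
      qed
      moreover have "4*r*\<eta> = e/2" unfolding \<eta>_def using r by simp
      ultimately show "Fen r W a b u \<le> Fen r W a b v + e" by linarith
    qed
  qed
qed


end
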